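(* Let $\Gamma$ be a subalgebra of the $\Bbbk$-algebra $A$ and let $\sim$ be the equivalence relation on $\mathrm{cfs}(\Gamma)$ generated by $\mathfrak m\sim\mathfrak n$ whenever $\mathrm{Ext}^1_\Gamma(S_{\mathfrak m},S_{\mathfrak n})\ne0$. If $\Gamma$ is quasinoetherian with respect to $\sim$ and $\Gamma$ is quasicentral in $A$, then $\Gamma$ is a Harish-Chandra block subalgebra of $A$ with respect to $\sim$.
   Context: $\mathrm{cfs}(\Gamma)$: maximal two-sided ideals $\mathfrak m$ of $\Gamma$ with $\dim\Gamma/\mathfrak m<\infty$; $S_{\mathfrak m}$ the unique simple $\Gamma/\mathfrak m$-module. For a class $B$, $\mathcal W(B)=\{\mathfrak m_1\cdots\mathfrak m_k:k\ge0,\mathfrak m_i\in B\}$; for a $\Gamma$-module $V$, $V(B)=\{v:\mathfrak mv=0$ for some $\mathfrak m\in\mathcal W(B)\}$; $V$ is a block module if $V=\bigoplus_BV(B)$. $\Gamma$ is quasinoetherian w.r.t. $\sim$ if $\Gamma/\mathfrak m$ is finite-dimensional for every class $B$ and $\mathfrak m\in\mathcal W(B)$. $\Gamma$ is quasicentral in $A$ if $\Gamma a\Gamma$ is finitely generated as a left and as a right $\Gamma$-module for every $a\in A$. $\Gamma$ is a Harish-Chandra block subalgebra of $A$ w.r.t. $\sim$ if $A/A\mathfrak m$ is a block module over $\Gamma$ for every $B$ and $\mathfrak m\in\mathcal W(B)$. *)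

theory Defs
  imports Complex_Main
begin

section \<open>Ambient k-algebra A (= UNIV of type 'a) and subalgebra Gamma\<close>

definition kalg :: "('k::field \<Rightarrow> 'a::ring_1 \<Rightarrow> 'a) \<Rightarrow> bool" where
  "kalg smul \<longleftrightarrow> vector_space smul \<and>
     (\<forall>c x y. smul c (x * y) = smul c x * y \<and> smul c (x * y) = x * smul c y)"

definition subalg :: "('k::field \<Rightarrow> 'a::ring_1 \<Rightarrow> 'a) \<Rightarrow> 'a set \<Rightarrow> bool" where
  "subalg smul G \<longleftrightarrow> 0 \<in> G \<and> 1 \<in> G \<and> (\<forall>x\<in>G. \<forall>y\<in>G. x + y \<in> G \<and> x * y \<in> G)
     \<and> (\<forall>x\<in>G. - x \<in> G) \<and> (\<forall>c. \<forall>x\<in>G. smul c x \<in> G)"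

definition ideal2 :: "'a::ring_1 set \<Rightarrow> 'a set \<Rightarrow> bool" where
  "ideal2 G I \<longleftrightarrow> I \<subseteq> G \<and> 0 \<in> I \<and> (\<forall>x\<in>I. \<forall>y\<in>I. x + y \<in> I) \<and> (\<forall>x\<in>I. - x \<in> I)
     \<and> (\<forall>g\<in>G. \<forall>x\<in>I. g * x \<in> I \<and> x * g \<in> I)"

definition findim_quot :: "('k::field \<Rightarrow> 'a::ring_1 \<Rightarrow> 'a) \<Rightarrow> 'a set \<Rightarrow> 'a set \<Rightarrow> bool" where
  "findim_quot smul G I \<longleftrightarrow>
     (\<exists>F. finite F \<and> F \<subseteq> G \<and> (\<forall>g\<in>G. \<exists>f\<in>module.span smul F. g - f \<in> I))"

definition cfs :: "('k::field \<Rightarrow> 'a::ring_1 \<Rightarrow> 'a) \<Rightarrow> 'a set \<Rightarrow> 'a set set" where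
  "cfs smul G = {m. ideal2 G m \<and> m \<noteq> G \<and> (\<forall>I. ideal2 G I \<and> m \<subseteq> I \<longrightarrow> I = m \<or> I = G)
                  \<and> findim_quot smul G m}"

section \<open>Finite-dimensional Gamma-modules as matrix representations on k^d\<close>

definition rep :: "('k::field \<Rightarrow> 'a::ring_1 \<Rightarrow> 'a) \<Rightarrow> 'a set \<Rightarrow> nat \<Rightarrow> ('a \<Rightarrow> nat \<Rightarrow> nat \<Rightarrow> 'k) \<Rightarrow> bool" where
  "rep smul G d \<rho> \<longleftrightarrow>
     (\<forall>i<d. \<forall>j<d. \<rho> 1 i j = (if i = j then 1 else 0)) \<and>
     (\<forall>x\<in>G. \<forall>y\<in>G. \<forall>i<d. \<forall>j<d. \<rho> (x + y) i j = \<rho> x i j + \<rho> y i j \<and>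
                                 \<rho> (x * y) i j = (\<Sum>l<d. \<rho> x i l * \<rho> y l j)) \<and>
     (\<forall>c. \<forall>x\<in>G. \<forall>i<d. \<forall>j<d. \<rho> (smul c x) i j = c * \<rho> x i j)"

definition vecs :: "nat \<Rightarrow> (nat \<Rightarrow> 'k::field) set" where
  "vecs d = {v. \<forall>i\<ge>d. v i = 0}"

definition mapply :: "nat \<Rightarrow> (nat \<Rightarrow> nat \<Rightarrow> 'k::field) \<Rightarrow> (nat \<Rightarrow> 'k) \<Rightarrow> (nat \<Rightarrow> 'k)" where
  "mapply d M v = (\<lambda>i. if i < d then (\<Sum>j<d. M i j * v j) else 0)"

definition simple_rep :: "('k::field \<Rightarrow> 'a::ring_1 \<Rightarrow> 'a) \<Rightarrow> 'a set \<Rightarrow> nat \<Rightarrow> ('a \<Rightarrow> nat \<Rightarrow> nat \<Rightarrow> 'k) \<Rightarrow> bool" where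
  "simple_rep smul G d \<rho> \<longleftrightarrow> rep smul G d \<rho> \<and> 0 < d \<and>
     (\<forall>U. U \<subseteq> vecs d \<and> (\<lambda>_. 0) \<in> U \<and> (\<forall>u\<in>U. \<forall>v\<in>U. (\<lambda>i. u i + v i) \<in> U)
          \<and> (\<forall>c. \<forall>u\<in>U. (\<lambda>i. c * u i) \<in> U) \<and> (\<forall>g\<in>G. \<forall>u\<in>U. mapply d (\<rho> g) u \<in> U)
        \<longrightarrow> U = {\<lambda>_. 0} \<or> U = vecs d)"

text \<open>A realization of the simple Gamma/m-module S_m (unique up to isomorphism).\<close>
definition simple_quot_rep :: "('k::field \<Rightarrow> 'a::ring_1 \<Rightarrow> 'a) \<Rightarrow> 'a set \<Rightarrow> 'a set \<Rightarrow> nat \<Rightarrow> ('a \<Rightarrow> nat \<Rightarrow> nat \<Rightarrow> 'k) \<Rightarrow> bool" where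
  "simple_quot_rep smul G m d \<rho> \<longleftrightarrow> simple_rep smul G d \<rho> \<and> (\<forall>x\<in>m. \<forall>i<d. \<forall>j<d. \<rho> x i j = 0)"

text \<open>There is a non-split extension 0 -> T -> E -> S -> 0 (E = T (+) S as vector space,
  inclusion into the first dT coordinates, projection onto the last dS coordinates,
  both Gamma-linear; non-split = no Gamma-linear section of the projection).\<close>
definition ext_nonsplit :: "('k::field \<Rightarrow> 'a::ring_1 \<Rightarrow> 'a) \<Rightarrow> 'a set \<Rightarrow> nat \<Rightarrow> ('a \<Rightarrow> nat \<Rightarrow> nat \<Rightarrow> 'k)
    \<Rightarrow> nat \<Rightarrow> ('a \<Rightarrow> nat \<Rightarrow> nat \<Rightarrow> 'k) \<Rightarrow> bool" where
  "ext_nonsplit smul G dT \<rho>T dS \<rho>S \<longleftrightarrow>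
    (\<exists>\<rho>E. rep smul G (dT + dS) \<rho>E \<and>
       (\<forall>g\<in>G. (\<forall>i<dT. \<forall>j<dT. \<rho>E g i j = \<rho>T g i j) \<and>
               (\<forall>i<dS. \<forall>j<dT. \<rho>E g (dT + i) j = 0) \<and>
               (\<forall>i<dS. \<forall>j<dS. \<rho>E g (dT + i) (dT + j) = \<rho>S g i j)) \<and>
       \<not> (\<exists>\<sigma>. (\<forall>i<dS. \<forall>j<dS. \<sigma> (dT + i) j = (if i = j then 1 else 0)) \<and>
              (\<forall>g\<in>G. \<forall>i<dT + dS. \<forall>j<dS.
                  (\<Sum>l<dT + dS. \<rho>E g i l * \<sigma> l j) = (\<Sum>l<dS. \<sigma> i l * \<rho>S g l j))))"

text \<open>Ext^1_Gamma(S_m, S_n) \<noteq> 0.\<close>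
definition ext1_nz :: "('k::field \<Rightarrow> 'a::ring_1 \<Rightarrow> 'a) \<Rightarrow> 'a set \<Rightarrow> 'a set \<Rightarrow> 'a set \<Rightarrow> bool" where
  "ext1_nz smul G m n \<longleftrightarrow>
    (\<exists>dS \<rho>S dT \<rho>T. simple_quot_rep smul G m dS \<rho>S \<and> simple_quot_rep smul G n dT \<rho>T \<and>
        ext_nonsplit smul G dT \<rho>T dS \<rho>S)"

definition sim_rel :: "('k::field \<Rightarrow> 'a::ring_1 \<Rightarrow> 'a) \<Rightarrow> 'a set \<Rightarrow> ('a set \<times> 'a set) set" where
  "sim_rel smul G = {(m, n). m \<in> cfs smul G \<and> n \<in> cfs smul G \<and>
     (\<lambda>x y. x \<in> cfs smul G \<and> y \<in> cfs smul G \<and> (ext1_nz smul G x y \<or> ext1_nz smul G y x))\<^sup>*\<^sup>* m n}"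

definition ideal_prod :: "'a::ring_1 set \<Rightarrow> 'a set \<Rightarrow> 'a set" where
  "ideal_prod I J = {\<Sum>i<n. x i * y i | (n::nat) x y. \<forall>i<n. x i \<in> I \<and> y i \<in> J}"

inductive_set Wset :: "'a::ring_1 set \<Rightarrow> 'a set set \<Rightarrow> 'a set set" for G B where
  Wnil: "G \<in> Wset G B"
| Wcons: "I \<in> Wset G B \<Longrightarrow> n \<in> B \<Longrightarrow> ideal_prod I n \<in> Wset G B"

definition quasinoetherian :: "('k::field \<Rightarrow> 'a::ring_1 \<Rightarrow> 'a) \<Rightarrow> 'a set \<Rightarrow> ('a set \<times> 'a set) set \<Rightarrow> bool" where
  "quasinoetherian smul G R \<longleftrightarrow> (\<forall>B\<in>cfs smul G // R. \<forall>m\<in>Wset G B. findim_quot smul G m)"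

definition bimod :: "'a::ring_1 set \<Rightarrow> 'a \<Rightarrow> 'a set" where
  "bimod G a = {\<Sum>i<n. g i * a * h i | (n::nat) g h. \<forall>i<n. g i \<in> G \<and> h i \<in> G}"

definition quasicentral :: "'a::ring_1 set \<Rightarrow> bool" where
  "quasicentral G \<longleftrightarrow> (\<forall>a.
     (\<exists>F. finite F \<and> F \<subseteq> bimod G a \<and> bimod G a \<subseteq> {\<Sum>f\<in>F. c f * f | c. \<forall>f\<in>F. c f \<in> G}) \<and>
     (\<exists>F. finite F \<and> F \<subseteq> bimod G a \<and> bimod G a \<subseteq> {\<Sum>f\<in>F. f * c f | c. \<forall>f\<in>F. c f \<in> G}))"

definition left_gen :: "'a::ring_1 set \<Rightarrow> 'a set" where
  "left_gen m = {\<Sum>i<n. a i * x i | (n::nat) a x. \<forall>i<n. x i \<in> m}"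

text \<open>Preimage in A of V(B) for V = A / L.\<close>
definition vlift :: "'a::ring_1 set \<Rightarrow> 'a set \<Rightarrow> 'a set set \<Rightarrow> 'a set" where
  "vlift G L B = {a. \<exists>n\<in>Wset G B. \<forall>x\<in>n. x * a \<in> L}"

text \<open>A / L is the (internal) direct sum of its subspaces V(B), B ranging over the classes Cls.\<close>
definition block_quot :: "'a::ring_1 set \<Rightarrow> 'a set set set \<Rightarrow> 'a set \<Rightarrow> bool" where
  "block_quot G Cls L \<longleftrightarrow>
     (\<forall>a. \<exists>C f. finite C \<and> C \<subseteq> Cls \<and> (\<forall>B\<in>C. f B \<in> vlift G L B) \<and> a - (\<Sum>B\<in>C. f B) \<in> L) \<and>
     (\<forall>C f. finite C \<and> C \<subseteq> Cls \<and> (\<forall>B\<in>C. f B \<in> vlift G L B) \<and> (\<Sum>B\<in>C. f B) \<in> L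
        \<longrightarrow> (\<forall>B\<in>C. f B \<in> L))"

definition HC_block :: "('k::field \<Rightarrow> 'a::ring_1 \<Rightarrow> 'a) \<Rightarrow> 'a set \<Rightarrow> ('a set \<times> 'a set) set \<Rightarrow> bool" where
  "HC_block smul G R \<longleftrightarrow>
     (\<forall>B\<in>cfs smul G // R. \<forall>m\<in>Wset G B. block_quot G (cfs smul G // R) (left_gen m))"

end

theory Submission
  imports Defs
begin

locale hcb =
  fixes smul :: "'k::field \<Rightarrow> 'a::ring_1 \<Rightarrow> 'a" and G :: "'a set"
  assumes kalg: "kalg smul" and sub: "subalg smul G"
begin

sublocale vs: vector_space smul
  using kalg unfolding kalg_def by auto

lemma smul_mult_left: "smul c (x * y) = smul c x * y"
  using kalg unfolding kalg_def by auto

lemma smul_mult_right: "smul c (x * y) = x * smul c y"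
  using kalg unfolding kalg_def by metis

lemma smul_as_mult: "smul c x = smul c 1 * x"
  using smul_mult_left[of c 1 x] by simp

lemma G0: "0 \<in> G" and G1: "1 \<in> G"
  and Gadd: "x \<in> G \<Longrightarrow> y \<in> G \<Longrightarrow> x + y \<in> G"
  and Gmult: "x \<in> G \<Longrightarrow> y \<in> G \<Longrightarrow> x * y \<in> G"
  and Gneg: "x \<in> G \<Longrightarrow> - x \<in> G"
  and Gsmul: "x \<in> G \<Longrightarrow> smul c x \<in> G"
  using sub unfolding subalg_def by auto

lemma Gdiff: "x \<in> G \<Longrightarrow> y \<in> G \<Longrightarrow> x - y \<in> G"
  using Gadd Gneg by (metis diff_conv_add_uminus)

lemma subspace_G: "vs.subspace G"
  unfolding vs.subspace_def using G0 Gadd Gsmul by auto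

lemma span_G: "F \<subseteq> G \<Longrightarrow> vs.span F \<subseteq> G"
  using vs.span_minimal subspace_G by auto

definition submod :: "'a set \<Rightarrow> bool" where
  "submod U \<longleftrightarrow> 0 \<in> U \<and> (\<forall>x\<in>U. \<forall>y\<in>U. x + y \<in> U) \<and> (\<forall>x\<in>U. - x \<in> U) \<and> (\<forall>g\<in>G. \<forall>x\<in>U. g * x \<in> U)"

lemma submod_0: "submod U \<Longrightarrow> 0 \<in> U"
  and submod_add: "submod U \<Longrightarrow> x \<in> U \<Longrightarrow> y \<in> U \<Longrightarrow> x + y \<in> U"
  and submod_neg: "submod U \<Longrightarrow> x \<in> U \<Longrightarrow> - x \<in> U"
  and submod_mult: "submod U \<Longrightarrow> g \<in> G \<Longrightarrow> x \<in> U \<Longrightarrow> g * x \<in> U"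
  unfolding submod_def by auto

lemma submod_diff: "submod U \<Longrightarrow> x \<in> U \<Longrightarrow> y \<in> U \<Longrightarrow> x - y \<in> U"
  using submod_add submod_neg by (metis diff_conv_add_uminus)

lemma submod_smul: "submod U \<Longrightarrow> x \<in> U \<Longrightarrow> smul c x \<in> U"
  using submod_mult[of U "smul c 1" x] Gsmul[OF G1] smul_as_mult by metis

lemma submod_subspace: "submod U \<Longrightarrow> vs.subspace U"
  unfolding vs.subspace_def using submod_0 submod_add submod_smul by blast

lemma submod_sum: "submod U \<Longrightarrow> (\<And>i. i \<in> S \<Longrightarrow> f i \<in> U) \<Longrightarrow> sum f S \<in> U"
  using vs.subspace_sum submod_subspace by blast

lemma submod_span: "submod U \<Longrightarrow> F \<subseteq> U \<Longrightarrow> vs.span F \<subseteq> U"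
  using vs.span_minimal submod_subspace by blast

lemma Gsum: "(\<And>i. i \<in> S \<Longrightarrow> f i \<in> G) \<Longrightarrow> sum f S \<in> G"
  using vs.subspace_sum subspace_G by blast

lemma ideal2_submod: "ideal2 G I \<Longrightarrow> submod I"
  unfolding ideal2_def submod_def by auto

lemma ideal2_sub: "ideal2 G I \<Longrightarrow> x \<in> I \<Longrightarrow> x \<in> G"
  unfolding ideal2_def by auto

lemma ideal2_multL: "ideal2 G I \<Longrightarrow> g \<in> G \<Longrightarrow> x \<in> I \<Longrightarrow> g * x \<in> I"
  and ideal2_multR: "ideal2 G I \<Longrightarrow> g \<in> G \<Longrightarrow> x \<in> I \<Longrightarrow> x * g \<in> I"
  unfolding ideal2_def by auto

lemma G_submod: "submod G"
  unfolding submod_def using G0 Gadd Gneg Gmult by auto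

lemma G_ideal: "ideal2 G G"
  unfolding ideal2_def using G0 Gadd Gneg Gmult by auto

definition modspan :: "'a set \<Rightarrow> 'a set \<Rightarrow> 'a set" where
  "modspan F W = {x. \<exists>y\<in>vs.span F. x - y \<in> W}"

definition ann :: "'a set \<Rightarrow> 'a set \<Rightarrow> 'a set" where
  "ann U W = {g\<in>G. \<forall>x\<in>U. g * x \<in> W}"

definition simpq :: "'a set \<Rightarrow> 'a set \<Rightarrow> bool" where
  "simpq U W \<longleftrightarrow> W \<subseteq> U \<and> U \<noteq> W \<and> (\<forall>Z. submod Z \<and> W \<subseteq> Z \<and> Z \<subseteq> U \<longrightarrow> Z = W \<or> Z = U)"

lemma ann_ideal: "submod U \<Longrightarrow> submod W \<Longrightarrow> ideal2 G (ann U W)"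
  unfolding ideal2_def ann_def
  apply (intro conjI)
  using G0 Gadd Gneg Gmult submod_0[of W] submod_add[of W] submod_neg[of W] submod_mult
  by (auto simp: distrib_right mult.assoc)

end

context hcb
begin

lemma dim_strict:
  assumes "vs.subspace S" "vs.subspace T" "S \<subseteq> T" "T \<subseteq> vs.span F" "finite F" "S \<noteq> T"
  shows "vs.dim S < vs.dim T"
proof -
  obtain B where B: "B \<subseteq> S" "vs.independent B" "S \<subseteq> vs.span B" "card B = vs.dim S"
    by (rule vs.basis_exists)
  have finB: "finite B" using vs.independent_span_bound[OF assms(5) B(2)] B(1) assms(3,4) by auto
  obtain t where t: "t \<in> T" "t \<notin> S" using assms(3,6) by auto
  have "vs.span B \<subseteq> S" using B(1) assms(1) vs.span_minimal by blast
  hence tB: "t \<notin> vs.span B" using t by auto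
  have ind: "vs.independent (insert t B)" using vs.independent_insertI[OF tB B(2)] .
  obtain A where A: "A \<subseteq> T" "vs.independent A" "T \<subseteq> vs.span A" "card A = vs.dim T"
    by (rule vs.basis_exists)
  have finA: "finite A" using vs.independent_span_bound[OF assms(5) A(2)] A(1) assms(4) by auto
  have "insert t B \<subseteq> vs.span A" using A(3) t(1) B(1) assms(3) by auto
  hence "card (insert t B) \<le> card A" using vs.independent_span_bound[OF finA ind] by auto
  moreover have "t \<notin> B" using tB vs.span_base by metis
  hence "card (insert t B) = card B + 1" using finB by simp
  ultimately show ?thesis using A(4) B(4) by simp
qed

lemma dim_mono_fin:
  assumes "vs.subspace S" "vs.subspace T" "S \<subseteq> T" "T \<subseteq> vs.span F" "finite F"
  shows "vs.dim S \<le> vs.dim T"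
  using dim_strict[OF assms] by (cases "S = T") auto

lemma dim_le_fin:
  assumes "T \<subseteq> vs.span F" "finite F"
  shows "vs.dim T \<le> card F"
  using vs.dim_le_card[OF assms] .

lemma modspan_mono: "W \<subseteq> W' \<Longrightarrow> modspan F W \<subseteq> modspan F W'"
  unfolding modspan_def by auto

lemma in_modspan: "x \<in> modspan F W \<longleftrightarrow> (\<exists>y\<in>vs.span F. x - y \<in> W)"
  unfolding modspan_def by auto

lemma fdq_inside:
  assumes U: "vs.subspace U" and WU: "W \<subseteq> U" and sp: "U \<subseteq> modspan F W" and fin: "finite F"
  shows "\<exists>F'. finite F' \<and> F' \<subseteq> U \<and> U \<subseteq> modspan F' W"
proof -
  define Z where "Z = vs.span F \<inter> U"
  have Zs: "vs.subspace Z" unfolding Z_def using U vs.subspace_inter by blast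
  obtain B where B: "B \<subseteq> Z" "vs.independent B" "Z \<subseteq> vs.span B"
    by (rule vs.basis_exists)
  have finB: "finite B" using vs.independent_span_bound[OF fin B(2)] B(1) unfolding Z_def by auto
  show ?thesis
  proof (intro exI conjI)
    show "finite B" by fact
    show "B \<subseteq> U" using B(1) unfolding Z_def by auto
    show "U \<subseteq> modspan B W"
    proof
      fix x assume x: "x \<in> U"
      then obtain y where y: "y \<in> vs.span F" "x - y \<in> W" using sp unfolding modspan_def by auto
      have "y \<in> U" using vs.subspace_diff[OF U x, of "x - y"] y(2) WU by auto
      hence "y \<in> vs.span B" using B(3) y(1) unfolding Z_def by auto
      thus "x \<in> modspan B W" using y(2) unfolding modspan_def by auto
    qed
  qed
qed

definition lsum :: "nat \<Rightarrow> (nat \<Rightarrow> 'k) \<Rightarrow> (nat \<Rightarrow> 'a) \<Rightarrow> 'a" where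
  "lsum d c e = (\<Sum>j<d. smul (c j) (e j))"

definition qbasis :: "'a set \<Rightarrow> 'a set \<Rightarrow> nat \<Rightarrow> (nat \<Rightarrow> 'a) \<Rightarrow> bool" where
  "qbasis U W d e \<longleftrightarrow> (\<forall>j<d. e j \<in> U) \<and> (\<forall>u\<in>U. \<exists>c. u - lsum d c e \<in> W) \<and>
     (\<forall>c. lsum d c e \<in> W \<longrightarrow> (\<forall>j<d. c j = 0))"

lemma min_span_indep:
  assumes W: "vs.subspace W" and fin: "finite F" and FU: "F \<subseteq> U" and sp: "U \<subseteq> modspan F W"
    and minimal: "\<And>F'. finite F' \<Longrightarrow> F' \<subseteq> U \<Longrightarrow> U \<subseteq> modspan F' W \<Longrightarrow> card F \<le> card F'"
    and cW: "(\<Sum>f\<in>F. smul (c f) f) \<in> W" and e: "e \<in> F"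
  shows "c e = 0"
proof (rule ccontr)
  assume ce: "c e \<noteq> 0"
  define R where "R = F - {e}"
  have Fe: "F = insert e R" "e \<notin> R" using e unfolding R_def by auto
  have sumsplit: "(\<Sum>f\<in>F. smul (c f) f) = smul (c e) e + (\<Sum>f\<in>R. smul (c f) f)"
    using Fe fin by (simp add: sum.insert_remove)
  define y where "y = - smul (inverse (c e)) (\<Sum>f\<in>R. smul (c f) f)"
  have yR: "y \<in> vs.span R" unfolding y_def
    by (intro vs.span_neg vs.span_scale vs.span_sum) (auto intro: vs.span_base)
  have ey: "e - y = smul (inverse (c e)) (\<Sum>f\<in>F. smul (c f) f)"
    unfolding y_def sumsplit using ce by (simp add: vs.scale_right_distrib)
  hence eyW: "e - y \<in> W" using vs.subspace_scale[OF W cW] by simp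
  have "U \<subseteq> modspan R W"
  proof
    fix x assume "x \<in> U"
    then obtain y' where y': "y' \<in> vs.span F" "x - y' \<in> W" using sp unfolding modspan_def by auto
    then obtain k where k: "y' - smul k e \<in> vs.span R" using vs.span_breakdown_eq Fe(1) by auto
    have in1: "y' - smul k e + smul k y \<in> vs.span R" using k yR vs.span_add vs.span_scale by blast
    have "x - (y' - smul k e + smul k y) = (x - y') + smul k (e - y)"
      by (simp add: vs.scale_right_diff_distrib algebra_simps)
    also have "\<dots> \<in> W" using y'(2) eyW W vs.subspace_add vs.subspace_scale by blast
    finally show "x \<in> modspan R W" using in1 unfolding modspan_def by blast
  qed
  moreover have "finite R" "R \<subseteq> U" using fin FU unfolding R_def by auto
  ultimately have "card F \<le> card R" using minimal by blast
  moreover have "card R < card F" using fin e unfolding R_def by (meson card_Diff1_less)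
  ultimately show False by simp
qed

lemma qbasis_exists:
  assumes W: "vs.subspace W" and fin: "finite F" and FU: "F \<subseteq> U" and sp: "U \<subseteq> modspan F W"
  shows "\<exists>d e. qbasis U W d e"
proof -
  define P where "P n \<longleftrightarrow> (\<exists>F'. finite F' \<and> F' \<subseteq> U \<and> U \<subseteq> modspan F' W \<and> card F' = n)" for n
  have "P (card F)" unfolding P_def using fin FU sp by blast
  hence "P (LEAST n. P n)" by (rule LeastI)
  then obtain F0 where F0: "finite F0" "F0 \<subseteq> U" "U \<subseteq> modspan F0 W" "card F0 = (LEAST n. P n)"
    unfolding P_def by blast
  have minimal: "card F0 \<le> card F'" if "finite F'" "F' \<subseteq> U" "U \<subseteq> modspan F' W" for F'
  proof -
    have "P (card F')" unfolding P_def using that by blast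
    hence "(LEAST n. P n) \<le> card F'" by (rule Least_le)
    thus ?thesis using F0(4) by simp
  qed
  obtain h where h: "bij_betw h {..<card F0} F0"
  proof -
    obtain h where "bij_betw h {0..<card F0} F0" using ex_bij_betw_nat_finite[OF F0(1)] by blast
    thus ?thesis using that unfolding atLeast0LessThan by blast
  qed
  have inj: "inj_on h {..<card F0}" using bij_betw_imp_inj_on[OF h] .
  have img: "h ` {..<card F0} = F0" using bij_betw_imp_surj_on[OF h] .
  have reidx: "(\<Sum>f\<in>F0. smul (c' f) f) = (\<Sum>j<card F0. smul (c' (h j)) (h j))" for c'
    using sum.reindex[OF inj, of "\<lambda>f. smul (c' f) f"] img by simp
  show ?thesis
  proof (intro exI[of _ "card F0"] exI[of _ h])
    show "qbasis U W (card F0) h"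
      unfolding qbasis_def
    proof (intro conjI allI impI ballI)
      fix j assume "j < card F0" thus "h j \<in> U" using img F0(2) by auto
    next
      fix u assume "u \<in> U"
      then obtain y where y: "y \<in> vs.span F0" "u - y \<in> W" using F0(3) unfolding modspan_def by auto
      then obtain c' where "y = (\<Sum>f\<in>F0. smul (c' f) f)" using vs.span_finite[OF F0(1)] by auto
      hence "y = lsum (card F0) (\<lambda>j. c' (h j)) h" unfolding lsum_def reidx by simp
      thus "\<exists>c. u - lsum (card F0) c h \<in> W" using y(2) by blast
    next
      fix c j assume cW: "lsum (card F0) c h \<in> W" and j: "j < card F0"
      define c' where "c' f = c (the_inv_into {..<card F0} h f)" for f
      have c'h: "c' (h i) = c i" if "i < card F0" for i
        unfolding c'_def using the_inv_into_f_f[OF inj] that by auto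
      have "(\<Sum>f\<in>F0. smul (c' f) f) = lsum (card F0) c h"
        unfolding reidx lsum_def using c'h by (intro sum.cong) auto
      hence cW': "(\<Sum>f\<in>F0. smul (c' f) f) \<in> W" using cW by simp
      have hj: "h j \<in> F0" using img j by auto
      have "c' (h j) = 0" by (rule min_span_indep[OF W F0(1) F0(2) F0(3) minimal cW' hj])
      thus "c j = 0" using c'h j by simp
    qed
  qed
qed

lemma fincodim_pullback:
  assumes K: "vs.subspace K" and W: "vs.subspace W" and fin: "finite F"
    and phi_add: "\<And>x y. phi (x + y) = phi x + phi y"
    and phi_smul: "\<And>c x. phi (smul c x) = smul c (phi x)"
    and img: "phi ` K \<subseteq> modspan F W"
  shows "\<exists>E. finite E \<and> E \<subseteq> K \<and> (\<forall>x\<in>K. \<exists>y\<in>vs.span E. phi (x - y) \<in> W)"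
proof -
  have phi0: "phi 0 = 0" using phi_add[of 0 0] by simp
  have phi_neg: "phi (- x) = - phi x" for x using phi_add[of x "- x"] phi0 by (simp add: eq_neg_iff_add_eq_0 add.commute)
  have phi_diff: "phi (x - y) = phi x - phi y" for x y
    using phi_add[of x "- y"] phi_neg[of y] by simp
  have phi_sum: "phi (\<Sum>b\<in>S. smul (c b) (k b)) = (\<Sum>b\<in>S. smul (c b) (phi (k b)))" if "finite S" for S c k
    using that by (induction S rule: finite_induct) (auto simp: phi0 phi_add phi_smul)
  define Z where "Z = vs.span F \<inter> {z. \<exists>k\<in>K. phi k - z \<in> W}"
  have Zs: "vs.subspace Z" unfolding Z_def vs.subspace_def
  proof (intro conjI ballI allI)
    show "0 \<in> vs.span F \<inter> {z. \<exists>k\<in>K. phi k - z \<in> W}"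
    proof (intro IntI CollectI bexI[of _ 0])
      show "0 \<in> vs.span F" by (rule vs.span_zero)
      show "0 \<in> K" by (rule vs.subspace_0[OF K])
      show "phi 0 - 0 \<in> W" using vs.subspace_0[OF W] phi0 by simp
    qed
  next
    fix x y assume x: "x \<in> vs.span F \<inter> {z. \<exists>k\<in>K. phi k - z \<in> W}"
      and y: "y \<in> vs.span F \<inter> {z. \<exists>k\<in>K. phi k - z \<in> W}"
    then obtain k1 k2 where k: "k1 \<in> K" "phi k1 - x \<in> W" "k2 \<in> K" "phi k2 - y \<in> W" by auto
    have "phi (k1 + k2) - (x + y) = (phi k1 - x) + (phi k2 - y)" by (simp add: phi_add algebra_simps)
    hence "phi (k1 + k2) - (x + y) \<in> W" using k W vs.subspace_add by metis
    thus "x + y \<in> vs.span F \<inter> {z. \<exists>k\<in>K. phi k - z \<in> W}"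
      using x y vs.span_add vs.subspace_add[OF K k(1) k(3)] by blast
  next
    fix c x assume x: "x \<in> vs.span F \<inter> {z. \<exists>k\<in>K. phi k - z \<in> W}"
    then obtain k1 where k: "k1 \<in> K" "phi k1 - x \<in> W" by auto
    have "phi (smul c k1) - smul c x = smul c (phi k1 - x)" by (simp add: phi_smul vs.scale_right_diff_distrib)
    hence "phi (smul c k1) - smul c x \<in> W" using k W vs.subspace_scale by metis
    thus "smul c x \<in> vs.span F \<inter> {z. \<exists>k\<in>K. phi k - z \<in> W}"
      using x vs.span_scale vs.subspace_scale[OF K k(1)] by blast
  qed
  obtain B where B: "B \<subseteq> Z" "vs.independent B" "Z \<subseteq> vs.span B"
    by (rule vs.basis_exists)
  have finB: "finite B" using vs.independent_span_bound[OF fin B(2)] B(1) unfolding Z_def by auto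
  have "\<forall>b\<in>B. \<exists>k\<in>K. phi k - b \<in> W" using B(1) unfolding Z_def by auto
  then obtain kb where kb: "\<And>b. b \<in> B \<Longrightarrow> kb b \<in> K \<and> phi (kb b) - b \<in> W" by metis
  show ?thesis
  proof (intro exI conjI ballI)
    show "finite (kb ` B)" using finB by simp
    show "kb ` B \<subseteq> K" using kb by auto
    fix x assume x: "x \<in> K"
    then obtain y where y: "y \<in> vs.span F" "phi x - y \<in> W" using img unfolding modspan_def by auto
    have "y \<in> Z" unfolding Z_def using y x by auto
    hence "y \<in> vs.span B" using B(3) by auto
    then obtain c where yc: "y = (\<Sum>b\<in>B. smul (c b) b)" using vs.span_finite[OF finB] by auto
    define y' where "y' = (\<Sum>b\<in>B. smul (c b) (kb b))"
    have y'E: "y' \<in> vs.span (kb ` B)" unfolding y'_def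
      by (intro vs.span_sum vs.span_scale vs.span_base) auto
    have "phi (x - y') = (phi x - y) - (\<Sum>b\<in>B. smul (c b) (phi (kb b) - b))"
      unfolding phi_diff y'_def phi_sum[OF finB] yc
      by (simp add: vs.scale_right_diff_distrib sum_subtractf)
    also have "\<dots> \<in> W"
    proof (rule vs.subspace_diff[OF W y(2)])
      show "(\<Sum>b\<in>B. smul (c b) (phi (kb b) - b)) \<in> W"
        using kb by (intro vs.subspace_sum[OF W]) (simp add: vs.subspace_scale[OF W])
    qed
    finally show "\<exists>y\<in>vs.span (kb ` B). phi (x - y) \<in> W" using y'E by blast
  qed
qed

end

lemma sum_concat:
  fixes a b :: "nat \<Rightarrow> 'b::comm_monoid_add"
  shows "(\<Sum>i<p+q. if i < p then a i else b (i - p)) = (\<Sum>i<p. a i) + (\<Sum>i<q. b i)"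
proof (induction q)
  case 0
  have "(\<Sum>i<p. if i < p then a i else b (i - p)) = (\<Sum>i<p. a i)"
    by (intro sum.cong) auto
  then show ?case by simp
next
  case (Suc q)
  have "(\<Sum>i<p+Suc q. if i < p then a i else b (i - p))
      = (\<Sum>i<p+q. if i < p then a i else b (i - p)) + b q"
    by simp
  then show ?case using Suc by (simp add: add.assoc)
qed

lemma ideal_prod_mem: "z \<in> ideal_prod I J \<longleftrightarrow> (\<exists>(n::nat) x y. z = (\<Sum>i<n. x i * y i) \<and> (\<forall>i<n. x i \<in> I \<and> y i \<in> J))"
  unfolding ideal_prod_def by blast

context hcb
begin

abbreviation "R \<equiv> sim_rel smul G"
abbreviation "Cls \<equiv> cfs smul G // R"

lemma ideal2_add: "ideal2 G I \<Longrightarrow> x \<in> I \<Longrightarrow> y \<in> I \<Longrightarrow> x + y \<in> I"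
  and ideal2_neg: "ideal2 G I \<Longrightarrow> x \<in> I \<Longrightarrow> - x \<in> I"
  and ideal2_0: "ideal2 G I \<Longrightarrow> 0 \<in> I"
  unfolding ideal2_def by auto

lemma ideal2_sum: "ideal2 G I \<Longrightarrow> (\<And>i. i \<in> S \<Longrightarrow> f i \<in> I) \<Longrightarrow> sum f S \<in> I"
  using submod_sum ideal2_submod by blast

lemma ideal2_diff: "ideal2 G I \<Longrightarrow> x \<in> I \<Longrightarrow> y \<in> I \<Longrightarrow> x - y \<in> I"
  using submod_diff ideal2_submod by blast

lemma ideal_prod_ideal:
  assumes I: "ideal2 G I" and J: "ideal2 G J"
  shows "ideal2 G (ideal_prod I J)"
  unfolding ideal2_def
proof (intro conjI ballI)
  show "ideal_prod I J \<subseteq> G"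
  proof
    fix z assume "z \<in> ideal_prod I J"
    then obtain x y and n :: nat where z: "z = (\<Sum>i<n. x i * y i)" "\<forall>i<n. x i \<in> I \<and> y i \<in> J"
      unfolding ideal_prod_mem by blast
    show "z \<in> G" unfolding z(1) using z(2) I J
      by (intro Gsum Gmult) (auto intro: ideal2_sub)
  qed
  show "0 \<in> ideal_prod I J" unfolding ideal_prod_mem by (rule exI[of _ 0]) simp
next
  fix u v assume "u \<in> ideal_prod I J" "v \<in> ideal_prod I J"
  then obtain x1 y1 x2 y2 and n1 n2 :: nat where u: "u = (\<Sum>i<n1. x1 i * y1 i)" "\<forall>i<n1. x1 i \<in> I \<and> y1 i \<in> J"
    and v: "v = (\<Sum>i<n2. x2 i * y2 i)" "\<forall>i<n2. x2 i \<in> I \<and> y2 i \<in> J"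
    unfolding ideal_prod_mem by blast
  define x where "x i = (if i < n1 then x1 i else x2 (i - n1))" for i
  define y where "y i = (if i < n1 then y1 i else y2 (i - n1))" for i
  have "u + v = (\<Sum>i<n1+n2. x i * y i)"
    unfolding u v x_def y_def using sum_concat[where a="\<lambda>i. x1 i * y1 i" and p=n1 and b="\<lambda>i. x2 i * y2 i" and q=n2]
    by (simp add: if_distrib if_distribR cong: if_cong)
  moreover have "\<forall>i<n1+n2. x i \<in> I \<and> y i \<in> J" using u(2) v(2) unfolding x_def y_def by auto
  ultimately show "u + v \<in> ideal_prod I J" unfolding ideal_prod_mem by blast
next
  fix u assume "u \<in> ideal_prod I J"
  then obtain x y and n :: nat where u: "u = (\<Sum>i<n. x i * y i)" "\<forall>i<n. x i \<in> I \<and> y i \<in> J"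
    unfolding ideal_prod_mem by blast
  have "- u = (\<Sum>i<n. (- x i) * y i)" unfolding u by (simp add: sum_negf)
  moreover have "\<forall>i<n. - x i \<in> I \<and> y i \<in> J" using u(2) ideal2_neg[OF I] by auto
  ultimately show "- u \<in> ideal_prod I J" unfolding ideal_prod_mem
    by (intro exI[of _ n] exI[of _ "\<lambda>i. - x i"] exI[of _ y]) simp
next
  fix g u assume g: "g \<in> G" and "u \<in> ideal_prod I J"
  then obtain x y and n :: nat where u: "u = (\<Sum>i<n. x i * y i)" "\<forall>i<n. x i \<in> I \<and> y i \<in> J"
    unfolding ideal_prod_mem by blast
  have "g * u = (\<Sum>i<n. (g * x i) * y i)" unfolding u by (simp add: sum_distrib_left mult.assoc)
  moreover have "\<forall>i<n. g * x i \<in> I \<and> y i \<in> J" using u(2) ideal2_multL[OF I g] by auto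
  ultimately show "g * u \<in> ideal_prod I J" unfolding ideal_prod_mem
    by (intro exI[of _ n] exI[of _ "\<lambda>i. g * x i"] exI[of _ y]) simp
  have "u * g = (\<Sum>i<n. x i * (y i * g))" unfolding u by (simp add: sum_distrib_right mult.assoc)
  moreover have "\<forall>i<n. x i \<in> I \<and> y i * g \<in> J" using u(2) ideal2_multR[OF J g] by auto
  ultimately show "u * g \<in> ideal_prod I J" unfolding ideal_prod_mem
    by (intro exI[of _ n] exI[of _ x] exI[of _ "\<lambda>i. y i * g"]) simp
qed

lemma ideal_prod_subR:
  assumes I: "ideal2 G I" and J: "ideal2 G J"
  shows "ideal_prod I J \<subseteq> J"
proof
  fix z assume "z \<in> ideal_prod I J"
  then obtain x y and n :: nat where z: "z = (\<Sum>i<n. x i * y i)" "\<forall>i<n. x i \<in> I \<and> y i \<in> J"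
    unfolding ideal_prod_mem by blast
  show "z \<in> J" unfolding z(1) using z(2)
    by (intro ideal2_sum[OF J] ideal2_multL[OF J]) (auto intro: ideal2_sub[OF I])
qed

lemma ideal_prod_subL:
  assumes I: "ideal2 G I" and J: "ideal2 G J"
  shows "ideal_prod I J \<subseteq> I"
proof
  fix z assume "z \<in> ideal_prod I J"
  then obtain x y and n :: nat where z: "z = (\<Sum>i<n. x i * y i)" "\<forall>i<n. x i \<in> I \<and> y i \<in> J"
    unfolding ideal_prod_mem by blast
  show "z \<in> I" unfolding z(1) using z(2)
    by (intro ideal2_sum[OF I] ideal2_multR[OF I]) (auto intro: ideal2_sub[OF J])
qed

lemma ideal_prod_single: "x \<in> I \<Longrightarrow> y \<in> J \<Longrightarrow> x * y \<in> ideal_prod I J"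
  unfolding ideal_prod_mem by (intro exI[of _ 1] exI[of _ "\<lambda>_. x"] exI[of _ "\<lambda>_. y"]) auto

lemma cfs_ideal: "M \<in> cfs smul G \<Longrightarrow> ideal2 G M"
  and cfs_ne: "M \<in> cfs smul G \<Longrightarrow> M \<noteq> G"
  and cfs_max: "M \<in> cfs smul G \<Longrightarrow> ideal2 G I \<Longrightarrow> M \<subseteq> I \<Longrightarrow> I = M \<or> I = G"
  and cfs_fin: "M \<in> cfs smul G \<Longrightarrow> findim_quot smul G M"
  unfolding cfs_def by auto

lemma Wset_ideal: "I \<in> Wset G B \<Longrightarrow> B \<subseteq> cfs smul G \<Longrightarrow> ideal2 G I"
  by (induction rule: Wset.induct) (auto intro: G_ideal ideal_prod_ideal cfs_ideal)

lemma ideal2_sum_set: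
  assumes I: "ideal2 G I" and J: "ideal2 G J"
  shows "ideal2 G {a + b |a b. a \<in> I \<and> b \<in> J}"
proof -
  let ?S = "{a + b |a b. a \<in> I \<and> b \<in> J}"
  have mem: "a + b \<in> ?S" if "a \<in> I" "b \<in> J" for a b using that by blast
  have dest: "\<exists>a b. x = a + b \<and> a \<in> I \<and> b \<in> J" if "x \<in> ?S" for x using that by simp
  show ?thesis unfolding ideal2_def
  proof (intro conjI ballI)
    show "?S \<subseteq> G"
    proof
      fix x assume xS: "x \<in> ?S"
      obtain a b where "x = a + b" "a \<in> I" "b \<in> J" using dest[OF xS] by blast
      thus "x \<in> G" using ideal2_sub[OF I] ideal2_sub[OF J] Gadd by simp
    qed
    show "0 \<in> ?S" using mem[OF ideal2_0[OF I] ideal2_0[OF J]] by simp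
  next
    fix x y assume xS: "x \<in> ?S" and yS: "y \<in> ?S"
    obtain a b where ab: "x = a + b" "a \<in> I" "b \<in> J" using dest[OF xS] by blast
    obtain c d where cd: "y = c + d" "c \<in> I" "d \<in> J" using dest[OF yS] by blast
    note abcd = ab(1) cd(1) ab(2,3) cd(2,3)
    have "x + y = (a + c) + (b + d)" unfolding abcd(1,2) by (simp add: algebra_simps)
    thus "x + y \<in> ?S" using mem[OF ideal2_add[OF I abcd(3,5)] ideal2_add[OF J abcd(4,6)]] by simp
  next
    fix x assume xS: "x \<in> ?S"
    obtain a b where ab: "x = a + b" "a \<in> I" "b \<in> J" using dest[OF xS] by blast
    have "- x = (- a) + (- b)" unfolding ab(1) by simp
    thus "- x \<in> ?S" using mem[OF ideal2_neg[OF I ab(2)] ideal2_neg[OF J ab(3)]] by simp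
  next
    fix g x assume g: "g \<in> G" and xS: "x \<in> ?S"
    obtain a b where ab: "x = a + b" "a \<in> I" "b \<in> J" using dest[OF xS] by blast
    have "g * x = g * a + g * b" "x * g = a * g + b * g" unfolding ab(1) by (simp_all add: algebra_simps)
    thus "g * x \<in> ?S" "x * g \<in> ?S"
      using mem[OF ideal2_multL[OF I g ab(2)] ideal2_multL[OF J g ab(3)]]
        mem[OF ideal2_multR[OF I g ab(2)] ideal2_multR[OF J g ab(3)]] by simp_all
  qed
qed

lemma one_not_ideal: assumes I: "ideal2 G I" and ne: "I \<noteq> G" shows "1 \<notin> I"
proof
  assume one: "1 \<in> I"
  have "G \<subseteq> I"
  proof
    fix g assume g: "g \<in> G"
    have "g * 1 \<in> I" by (rule ideal2_multL[OF I g one])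
    thus "g \<in> I" by simp
  qed
  moreover have "I \<subseteq> G" using I unfolding ideal2_def by simp
  ultimately show False using ne by simp
qed

lemma max_prime:
  assumes M: "M \<in> cfs smul G" and I: "ideal2 G I" and J: "ideal2 G J"
    and sub: "ideal_prod I J \<subseteq> M"
  shows "I \<subseteq> M \<or> J \<subseteq> M"
proof (rule ccontr)
  assume "\<not> (I \<subseteq> M \<or> J \<subseteq> M)"
  then obtain x where x: "x \<in> I" "x \<notin> M" and JM: "\<not> J \<subseteq> M" by auto
  define S where "S = {a + b |a b. a \<in> I \<and> b \<in> M}"
  have mem: "a + b \<in> S" if "a \<in> I" "b \<in> M" for a b using that unfolding S_def by blast
  have S: "ideal2 G S" unfolding S_def using ideal2_sum_set[OF I cfs_ideal[OF M]] .
  have "M \<subseteq> S"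
  proof
    fix y assume "y \<in> M" thus "y \<in> S" using mem[OF ideal2_0[OF I], of y] by simp
  qed
  moreover have "x \<in> S" using mem[OF x(1) ideal2_0[OF cfs_ideal[OF M]]] by simp
  ultimately have "S = G" using cfs_max[OF M S] x(2) by auto
  hence "1 \<in> S" using G1 by simp
  hence "\<exists>a b. 1 = a + b \<and> a \<in> I \<and> b \<in> M" unfolding S_def by simp
  then obtain a b where ab: "1 = a + b" "a \<in> I" "b \<in> M" by blast
  have "J \<subseteq> M"
  proof
    fix y assume y: "y \<in> J"
    have "y = a * y + b * y" using ab(1) by (metis distrib_right mult_1)
    moreover have "a * y \<in> M" using sub ideal_prod_single[OF ab(2) y] by auto
    moreover have "b * y \<in> M" using ideal2_multR[OF cfs_ideal[OF M] ideal2_sub[OF J y] ab(3)] .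
    ultimately show "y \<in> M" using ideal2_add[OF cfs_ideal[OF M]] by metis
  qed
  thus False using JM by simp
qed

lemma Wset_in_max:
  assumes "I \<in> Wset G B" "B \<subseteq> cfs smul G" "M \<in> cfs smul G" "I \<subseteq> M"
  shows "M \<in> B"
  using assms
proof (induction rule: Wset.induct)
  case Wnil
  have "M \<subseteq> G" using cfs_ideal[OF Wnil(2)] unfolding ideal2_def by simp
  hence "M = G" using Wnil(3) by simp
  thus ?case using cfs_ne[OF Wnil(2)] by simp
next
  case (Wcons I n)
  have In: "ideal2 G I" using Wset_ideal[OF Wcons(1,4)] .
  have nc: "n \<in> cfs smul G" using Wcons(2,4) by auto
  have nn: "ideal2 G n" using cfs_ideal[OF nc] .
  from max_prime[OF Wcons(5) In nn Wcons(6)] show ?case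
  proof
    assume "I \<subseteq> M" thus ?thesis using Wcons.IH[OF Wcons(4,5)] by simp
  next
    assume nM: "n \<subseteq> M"
    have "M = n \<or> M = G" using cfs_max[OF nc cfs_ideal[OF Wcons(5)] nM] .
    thus ?thesis using cfs_ne[OF Wcons(5)] Wcons(2) by auto
  qed
qed

lemma max_exists:
  assumes I: "ideal2 G I" and IG: "I \<noteq> G" and fq: "findim_quot smul G I"
  shows "\<exists>M\<in>cfs smul G. I \<subseteq> M"
proof -
  from fq obtain F0 where F0: "finite F0" "F0 \<subseteq> G" "\<forall>g\<in>G. \<exists>f\<in>vs.span F0. g - f \<in> I"
    unfolding findim_quot_def by blast
  define V0 where "V0 = vs.span F0"
  define P where "P J \<longleftrightarrow> ideal2 G J \<and> I \<subseteq> J \<and> J \<noteq> G" for J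
  have bound: "\<forall>J. P J \<longrightarrow> vs.dim (V0 \<inter> J) < Suc (card F0)"
  proof (intro allI impI)
    fix J
    have "V0 \<inter> J \<subseteq> vs.span F0" unfolding V0_def by blast
    hence "vs.dim (V0 \<inter> J) \<le> card F0" using dim_le_fin F0(1) by blast
    thus "vs.dim (V0 \<inter> J) < Suc (card F0)" by simp
  qed
  have PI: "P I" unfolding P_def using I IG by simp
  have "\<exists>x. P x \<and> (\<forall>y. P y \<longrightarrow> vs.dim (V0 \<inter> y) \<le> vs.dim (V0 \<inter> x))"
    by (rule Lattices_Big.ex_has_greatest_nat[OF PI bound])
  then obtain M where M1: "P M" and M2: "\<And>J. P J \<Longrightarrow> vs.dim (V0 \<inter> J) \<le> vs.dim (V0 \<inter> M)"
    by blast
  have Mi: "ideal2 G M" "I \<subseteq> M" "M \<noteq> G" using M1 unfolding P_def by simp_all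
  have fqM: "findim_quot smul G M" unfolding findim_quot_def
  proof (intro exI[of _ F0] conjI ballI)
    show "finite F0" "F0 \<subseteq> G" by (fact F0(1), fact F0(2))
    fix g assume "g \<in> G"
    then obtain f where "f \<in> vs.span F0" "g - f \<in> I" using F0(3) by blast
    thus "\<exists>f\<in>vs.span F0. g - f \<in> M" using Mi(2) by blast
  qed
  have maxM: "J = M \<or> J = G" if J: "ideal2 G J" and MJ: "M \<subseteq> J" for J
  proof (rule ccontr)
    assume c: "\<not> (J = M \<or> J = G)"
    hence PJ: "P J" unfolding P_def using J MJ Mi(2) by auto
    have sub1: "V0 \<inter> M \<subseteq> V0 \<inter> J" using MJ by auto
    have ne: "V0 \<inter> M \<noteq> V0 \<inter> J"
    proof
      assume eq: "V0 \<inter> M = V0 \<inter> J"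
      have "J \<subseteq> M"
      proof
        fix x assume x: "x \<in> J"
        hence xG: "x \<in> G" using ideal2_sub[OF J] by simp
        then obtain f where f: "f \<in> V0" "x - f \<in> I" using F0(3) unfolding V0_def by blast
        have xfJ: "x - f \<in> J" using f(2) Mi(2) MJ by auto
        have "x - (x - f) \<in> J" by (rule ideal2_diff[OF J x xfJ])
        hence "f \<in> J" by simp
        hence "f \<in> M" using eq f(1) by auto
        moreover have "x - f \<in> M" using f(2) Mi(2) by auto
        ultimately have "(x - f) + f \<in> M" using ideal2_add[OF Mi(1)] by blast
        thus "x \<in> M" by simp
      qed
      thus False using c MJ by auto
    qed
    have ssM: "vs.subspace (V0 \<inter> M)" unfolding V0_def
      by (rule vs.subspace_inter[OF vs.subspace_span submod_subspace[OF ideal2_submod[OF Mi(1)]]])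
    have ssJ: "vs.subspace (V0 \<inter> J)" unfolding V0_def
      by (rule vs.subspace_inter[OF vs.subspace_span submod_subspace[OF ideal2_submod[OF J]]])
    have sp: "V0 \<inter> J \<subseteq> vs.span F0" unfolding V0_def by blast
    have "vs.dim (V0 \<inter> M) < vs.dim (V0 \<inter> J)"
      by (rule dim_strict[OF ssM ssJ sub1 sp F0(1) ne])
    thus False using M2[OF PJ] by simp
  qed
  have "M \<in> cfs smul G" unfolding cfs_def using Mi(1) Mi(3) fqM maxM by blast
  thus ?thesis using Mi(2) by blast
qed

end

lemma rtranclp_sym_aux:
  assumes "r\<^sup>*\<^sup>* a b" and "\<And>x y. r x y \<Longrightarrow> r y x"
  shows "r\<^sup>*\<^sup>* b a"
  using assms(1)
proof (induction rule: rtranclp.induct)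
  case (rtrancl_refl a) then show ?case by simp
next
  case (rtrancl_into_rtrancl a b c)
  have "r c b" using assms(2)[OF rtrancl_into_rtrancl(2)] .
  thus ?case using rtrancl_into_rtrancl(3) by (rule converse_rtranclp_into_rtranclp)
qed

context hcb
begin

lemma R_equiv: "equiv (cfs smul G) R"
proof (rule equivI)
  show "R \<subseteq> cfs smul G \<times> cfs smul G" unfolding sim_rel_def by auto
  show "refl_on (cfs smul G) R" unfolding sim_rel_def refl_on_def by auto
  show "sym R"
  proof (rule symI)
    fix x y assume "(x, y) \<in> R"
    thus "(y, x) \<in> R" unfolding sim_rel_def
      using rtranclp_sym_aux[where r="\<lambda>x y. x \<in> cfs smul G \<and> y \<in> cfs smul G \<and> (ext1_nz smul G x y \<or> ext1_nz smul G y x)"]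
      by blast
  qed
  show "trans R"
  proof (rule transI)
    fix x y z assume "(x, y) \<in> R" "(y, z) \<in> R"
    thus "(x, z) \<in> R" unfolding sim_rel_def by (auto intro: rtranclp_trans)
  qed
qed

lemma Cls_sub: "B \<in> Cls \<Longrightarrow> B \<subseteq> cfs smul G"
  using in_quotient_imp_subset[OF R_equiv] by blast

lemma Cls_eq: "B \<in> Cls \<Longrightarrow> B' \<in> Cls \<Longrightarrow> M \<in> B \<Longrightarrow> M \<in> B' \<Longrightarrow> B = B'"
  using quotient_disj[OF R_equiv] by blast

lemma Cls_class: "M \<in> cfs smul G \<Longrightarrow> R``{M} \<in> Cls"
  by (rule quotientI)

lemma Cls_self: "M \<in> cfs smul G \<Longrightarrow> M \<in> R``{M}"
  using equiv_class_self[OF R_equiv] by blast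

lemma Cls_rep: assumes "B \<in> Cls" "M \<in> B" shows "B = R``{M}"
proof -
  have Mc: "M \<in> cfs smul G" using Cls_sub[OF assms(1)] assms(2) by blast
  show ?thesis using Cls_eq[OF assms(1) Cls_class[OF Mc] assms(2) Cls_self[OF Mc]] .
qed

lemma not_linked:
  assumes B: "B \<in> Cls" and MB: "M \<in> B" and M': "M' \<in> cfs smul G" and M'B: "M' \<notin> B"
  shows "\<not> ext1_nz smul G M' M"
proof
  assume e: "ext1_nz smul G M' M"
  have Mc: "M \<in> cfs smul G" using Cls_sub[OF B] MB by blast
  have "(M, M') \<in> R" unfolding sim_rel_def using Mc M' e by auto
  hence "M' \<in> R``{M}" by simp
  thus False using Cls_rep[OF B MB] M'B by simp
qed

lemma comaximal:
  assumes qn: "quasinoetherian smul G R"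
    and B: "B \<in> Cls" and B': "B' \<in> Cls" and ne: "B \<noteq> B'"
    and n: "n \<in> Wset G B" and n': "n' \<in> Wset G B'"
  shows "\<exists>x\<in>n. \<exists>y\<in>n'. x + y = 1"
proof -
  have ni: "ideal2 G n" using Wset_ideal[OF n Cls_sub[OF B]] .
  have ni': "ideal2 G n'" using Wset_ideal[OF n' Cls_sub[OF B']] .
  define S where "S = {a + b |a b. a \<in> n \<and> b \<in> n'}"
  have mem: "a + b \<in> S" if "a \<in> n" "b \<in> n'" for a b using that unfolding S_def by blast
  have S: "ideal2 G S" unfolding S_def by (rule ideal2_sum_set[OF ni ni'])
  have nS: "n \<subseteq> S"
  proof
    fix y assume "y \<in> n" thus "y \<in> S" using mem[OF _ ideal2_0[OF ni'], of y] by simp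
  qed
  have n'S: "n' \<subseteq> S"
  proof
    fix y assume "y \<in> n'" thus "y \<in> S" using mem[OF ideal2_0[OF ni], of y] by simp
  qed
  have "S = G"
  proof (rule ccontr)
    assume SG: "S \<noteq> G"
    have "findim_quot smul G n" using qn B n unfolding quasinoetherian_def by blast
    then obtain F where F: "finite F" "F \<subseteq> G" "\<forall>g\<in>G. \<exists>f\<in>vs.span F. g - f \<in> n"
      unfolding findim_quot_def by blast
    have "findim_quot smul G S" unfolding findim_quot_def
    proof (intro exI[of _ F] conjI ballI)
      show "finite F" "F \<subseteq> G" by (fact F(1), fact F(2))
      fix g assume "g \<in> G"
      then obtain f where "f \<in> vs.span F" "g - f \<in> n" using F(3) by blast
      thus "\<exists>f\<in>vs.span F. g - f \<in> S" using nS by blast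
    qed
    then obtain M where M: "M \<in> cfs smul G" "S \<subseteq> M" using max_exists[OF S SG] by blast
    have "M \<in> B" using Wset_in_max[OF n Cls_sub[OF B] M(1)] nS M(2) by blast
    moreover have "M \<in> B'" using Wset_in_max[OF n' Cls_sub[OF B'] M(1)] n'S M(2) by blast
    ultimately show False using Cls_eq[OF B B'] ne by blast
  qed
  hence "1 \<in> S" using G1 by simp
  hence "\<exists>a b. 1 = a + b \<and> a \<in> n \<and> b \<in> n'" unfolding S_def by simp
  thus ?thesis by metis
qed

definition lid :: "'a set \<Rightarrow> bool" where
  "lid L \<longleftrightarrow> 0 \<in> L \<and> (\<forall>x\<in>L. \<forall>y\<in>L. x + y \<in> L) \<and> (\<forall>a. \<forall>x\<in>L. a * x \<in> L)"

lemma lid_0: "lid L \<Longrightarrow> 0 \<in> L" and lid_add: "lid L \<Longrightarrow> x \<in> L \<Longrightarrow> y \<in> L \<Longrightarrow> x + y \<in> L"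
  and lid_mult: "lid L \<Longrightarrow> x \<in> L \<Longrightarrow> a * x \<in> L"
  unfolding lid_def by auto

lemma lid_neg: "lid L \<Longrightarrow> x \<in> L \<Longrightarrow> - x \<in> L"
  using lid_mult[of L x "-1"] by simp

lemma lid_diff: "lid L \<Longrightarrow> x \<in> L \<Longrightarrow> y \<in> L \<Longrightarrow> x - y \<in> L"
  using lid_add lid_neg by (metis diff_conv_add_uminus)

lemma lid_submod: "lid L \<Longrightarrow> submod L"
  unfolding submod_def using lid_0 lid_add lid_neg lid_mult by blast

lemma ideal2_Int: "ideal2 G I \<Longrightarrow> ideal2 G J \<Longrightarrow> ideal2 G (I \<inter> J)"
  unfolding ideal2_def by auto

lemma uniq_aux:
  assumes qn: "quasinoetherian smul G R" and L: "lid L"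
    and B0: "B0 \<in> Cls" and n0: "n0 \<in> Wset G B0"
    and fin: "finite C'" and C': "C' \<subseteq> Cls" and B0C: "B0 \<notin> C'"
    and f: "\<forall>B\<in>C'. f B \<in> vlift G L B"
  shows "\<exists>J. ideal2 G J \<and> (\<forall>x\<in>J. x * (\<Sum>B\<in>C'. f B) \<in> L) \<and> (\<exists>a\<in>J. \<exists>b\<in>n0. a + b = 1)"
  using fin C' B0C f
proof (induction C' rule: finite_induct)
  case empty
  show ?case
  proof (intro exI[of _ G] conjI ballI)
    show "ideal2 G G" by (rule G_ideal)
    fix x show "x * (\<Sum>B\<in>{}. f B) \<in> L" using lid_0[OF L] by simp
  next
    have "0 \<in> n0" using ideal2_0[OF Wset_ideal[OF n0 Cls_sub[OF B0]]] .
    thus "\<exists>a\<in>G. \<exists>b\<in>n0. a + b = 1" using G1 by force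
  qed
next
  case (insert B' C')
  obtain J where J: "ideal2 G J" "\<forall>x\<in>J. x * (\<Sum>B\<in>C'. f B) \<in> L" "\<exists>a\<in>J. \<exists>b\<in>n0. a + b = 1"
    using insert by auto
  have B'C: "B' \<in> Cls" using insert(4) by auto
  have "f B' \<in> vlift G L B'" using insert(6) by auto
  then obtain n' where n': "n' \<in> Wset G B'" "\<forall>x\<in>n'. x * f B' \<in> L" unfolding vlift_def by blast
  have n'i: "ideal2 G n'" using Wset_ideal[OF n'(1) Cls_sub[OF B'C]] .
  have n0i: "ideal2 G n0" using Wset_ideal[OF n0 Cls_sub[OF B0]] .
  have ne: "B' \<noteq> B0" using insert(5) by auto
  obtain c d where cd: "c \<in> n'" "d \<in> n0" "c + d = 1"
    using comaximal[OF qn B'C B0 ne n'(1) n0] by blast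
  obtain a b where ab: "a \<in> J" "b \<in> n0" "a + b = 1" using J(3) by blast
  show ?case
  proof (intro exI[of _ "J \<inter> n'"] conjI ballI)
    show "ideal2 G (J \<inter> n')" by (rule ideal2_Int[OF J(1) n'i])
    fix x assume x: "x \<in> J \<inter> n'"
    have "x * (\<Sum>B\<in>insert B' C'. f B) = x * f B' + x * (\<Sum>B\<in>C'. f B)"
      using insert(1,2) by (simp add: distrib_left)
    thus "x * (\<Sum>B\<in>insert B' C'. f B) \<in> L" using x n'(2) J(2) lid_add[OF L] by simp
  next
    have aG: "a \<in> G" using ideal2_sub[OF J(1) ab(1)] .
    have bG: "b \<in> G" using ideal2_sub[OF n0i ab(2)] .
    have cG: "c \<in> G" using ideal2_sub[OF n'i cd(1)] .
    have "1 = (a + b) * (c + d)" using ab(3) cd(3) by simp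
    also have "\<dots> = a * c + (a * d + b * c + b * d)" by (simp add: algebra_simps)
    finally have eq: "a * c + (a * d + b * c + b * d) = 1" by simp
    have ac: "a * c \<in> J \<inter> n'" using ideal2_multR[OF J(1) cG ab(1)] ideal2_multL[OF n'i aG cd(1)] by simp
    have rest: "a * d + b * c + b * d \<in> n0"
      using ideal2_multL[OF n0i aG cd(2)] ideal2_multR[OF n0i cG ab(2)] ideal2_multL[OF n0i bG cd(2)]
        ideal2_add[OF n0i] by simp
    show "\<exists>a\<in>J \<inter> n'. \<exists>b\<in>n0. a + b = 1" using ac rest eq by blast
  qed
qed

lemma uniqueness:
  assumes qn: "quasinoetherian smul G R" and L: "lid L"
    and fin: "finite C" and C: "C \<subseteq> Cls"
    and f: "\<forall>B\<in>C. f B \<in> vlift G L B" and sumL: "(\<Sum>B\<in>C. f B) \<in> L"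
  shows "\<forall>B\<in>C. f B \<in> L"
proof
  fix B0 assume B0C: "B0 \<in> C"
  have B0: "B0 \<in> Cls" using C B0C by auto
  obtain n0 where n0: "n0 \<in> Wset G B0" "\<forall>x\<in>n0. x * f B0 \<in> L" using f B0C unfolding vlift_def by blast
  define C' where "C' = C - {B0}"
  have finC': "finite C'" using fin unfolding C'_def by simp
  have C'sub: "C' \<subseteq> Cls" using C unfolding C'_def by auto
  have B0C': "B0 \<notin> C'" unfolding C'_def by simp
  have fC': "\<forall>B\<in>C'. f B \<in> vlift G L B" using f unfolding C'_def by simp
  obtain J where J: "ideal2 G J" "\<forall>x\<in>J. x * (\<Sum>B\<in>C'. f B) \<in> L" "\<exists>a\<in>J. \<exists>b\<in>n0. a + b = 1"
    using uniq_aux[OF qn L B0 n0(1) finC' C'sub B0C' fC'] by blast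
  obtain a b where ab: "a \<in> J" "b \<in> n0" "a + b = 1" using J(3) by blast
  have split: "(\<Sum>B\<in>C. f B) = f B0 + (\<Sum>B\<in>C'. f B)"
    unfolding C'_def using fin B0C by (simp add: sum.remove)
  have "f B0 = a * (\<Sum>B\<in>C. f B) - a * (\<Sum>B\<in>C'. f B) + b * f B0"
  proof -
    have "f B0 = (a + b) * f B0" using ab(3) by simp
    also have "\<dots> = a * (\<Sum>B\<in>C. f B) - a * (\<Sum>B\<in>C'. f B) + b * f B0"
      unfolding split by (simp add: algebra_simps)
    finally show ?thesis .
  qed
  moreover have "a * (\<Sum>B\<in>C. f B) \<in> L" using lid_mult[OF L sumL] .
  moreover have "a * (\<Sum>B\<in>C'. f B) \<in> L" using J(2) ab(1) by blast
  moreover have "b * f B0 \<in> L" using n0(2) ab(2) by blast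
  ultimately show "f B0 \<in> L" using lid_add[OF L] lid_diff[OF L] by metis
qed

end

lemma sum_concat_mult:
  fixes a b c d :: "nat \<Rightarrow> 'b::ring"
  shows "(\<Sum>i<p+q. (if i < p then a i else b (i - p)) * (if i < p then c i else d (i - p)))
    = (\<Sum>i<p. a i * c i) + (\<Sum>i<q. b i * d i)"
proof -
  have "(\<Sum>i<p+q. (if i < p then a i else b (i - p)) * (if i < p then c i else d (i - p)))
     = (\<Sum>i<p+q. if i < p then a i * c i else b (i - p) * d (i - p))"
    by (intro sum.cong) auto
  also have "\<dots> = (\<Sum>i<p. a i * c i) + (\<Sum>i<q. b i * d i)"
    by (rule sum_concat)
  finally show ?thesis .
qed

context hcb
begin

lemma gen_by_ideal:
  assumes W: "submod W" and U: "submod U" and WU: "W \<subseteq> U"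
    and simple: "\<And>Z. submod Z \<Longrightarrow> W \<subseteq> Z \<Longrightarrow> Z \<subseteq> U \<Longrightarrow> Z = W \<or> Z = U"
    and I: "ideal2 G I" and x0: "x0 \<in> I" and u0: "u0 \<in> U" and x0u0: "x0 * u0 \<notin> W"
    and u: "u \<in> U"
  shows "\<exists>(k::nat) x us. (\<forall>i<k. x i \<in> I \<and> us i \<in> U) \<and> u - (\<Sum>i<k. x i * us i) \<in> W"
proof -
  define Z where "Z = {z. \<exists>(k::nat) x us. (\<forall>i<k. x i \<in> I \<and> us i \<in> U) \<and> z - (\<Sum>i<k. x i * us i) \<in> W}"
  have Zmem: "z \<in> Z \<longleftrightarrow> (\<exists>(k::nat) x us. (\<forall>i<k. x i \<in> I \<and> us i \<in> U) \<and> z - (\<Sum>i<k. x i * us i) \<in> W)" for z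
    unfolding Z_def by simp
  have IG: "\<And>x. x \<in> I \<Longrightarrow> x \<in> G" using ideal2_sub[OF I] .
  have WZ: "W \<subseteq> Z"
  proof
    fix w assume "w \<in> W"
    thus "w \<in> Z" unfolding Zmem by (intro exI[of _ 0]) simp
  qed
  have ZU: "Z \<subseteq> U"
  proof
    fix z assume "z \<in> Z"
    then obtain x us and k :: nat where h: "\<forall>i<k. x i \<in> I \<and> us i \<in> U" "z - (\<Sum>i<k. x i * us i) \<in> W"
      unfolding Zmem by blast
    have s: "(\<Sum>i<k. x i * us i) \<in> U" using h(1) IG by (intro submod_sum[OF U] submod_mult[OF U]) auto
    have "z = (z - (\<Sum>i<k. x i * us i)) + (\<Sum>i<k. x i * us i)" by simp
    also have "\<dots> \<in> U" using submod_add[OF U] h(2) WU s by blast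
    finally show "z \<in> U" .
  qed
  have Zs: "submod Z" unfolding submod_def
  proof (intro conjI ballI)
    show "0 \<in> Z" using WZ submod_0[OF W] by blast
  next
    fix z1 z2 assume "z1 \<in> Z" "z2 \<in> Z"
    then obtain x1 us1 x2 us2 and k1 k2 :: nat where h1: "\<forall>i<k1. x1 i \<in> I \<and> us1 i \<in> U" "z1 - (\<Sum>i<k1. x1 i * us1 i) \<in> W"
      and h2: "\<forall>i<k2. x2 i \<in> I \<and> us2 i \<in> U" "z2 - (\<Sum>i<k2. x2 i * us2 i) \<in> W"
      unfolding Zmem by blast
    define x where "x i = (if i < k1 then x1 i else x2 (i - k1))" for i
    define us where "us i = (if i < k1 then us1 i else us2 (i - k1))" for i
    have sum: "(\<Sum>i<k1+k2. x i * us i) = (\<Sum>i<k1. x1 i * us1 i) + (\<Sum>i<k2. x2 i * us2 i)"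
      unfolding x_def us_def by (rule sum_concat_mult)
    have "(z1 + z2) - (\<Sum>i<k1+k2. x i * us i) = (z1 - (\<Sum>i<k1. x1 i * us1 i)) + (z2 - (\<Sum>i<k2. x2 i * us2 i))"
      unfolding sum by (simp add: algebra_simps)
    also have "\<dots> \<in> W" using submod_add[OF W h1(2) h2(2)] .
    finally have "(z1 + z2) - (\<Sum>i<k1+k2. x i * us i) \<in> W" .
    moreover have "\<forall>i<k1+k2. x i \<in> I \<and> us i \<in> U" using h1(1) h2(1) unfolding x_def us_def by auto
    ultimately show "z1 + z2 \<in> Z" unfolding Zmem by blast
  next
    fix z assume "z \<in> Z"
    then obtain x us and k :: nat where h: "\<forall>i<k. x i \<in> I \<and> us i \<in> U" "z - (\<Sum>i<k. x i * us i) \<in> W"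
      unfolding Zmem by blast
    have "- z - (\<Sum>i<k. (- x i) * us i) = - (z - (\<Sum>i<k. x i * us i))" by (simp add: sum_negf)
    also have "\<dots> \<in> W" using submod_neg[OF W h(2)] .
    finally have "- z - (\<Sum>i<k. (- x i) * us i) \<in> W" .
    moreover have "\<forall>i<k. - x i \<in> I \<and> us i \<in> U" using h(1) ideal2_neg[OF I] by auto
    ultimately show "- z \<in> Z" unfolding Zmem
      by (intro exI[of _ k] exI[of _ "\<lambda>i. - x i"] exI[of _ us]) simp
  next
    fix g z assume g: "g \<in> G" and "z \<in> Z"
    then obtain x us and k :: nat where h: "\<forall>i<k. x i \<in> I \<and> us i \<in> U" "z - (\<Sum>i<k. x i * us i) \<in> W"
      unfolding Zmem by blast
    have "g * z - (\<Sum>i<k. (g * x i) * us i) = g * (z - (\<Sum>i<k. x i * us i))"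
      by (simp add: sum_distrib_left mult.assoc right_diff_distrib)
    also have "\<dots> \<in> W" using submod_mult[OF W g h(2)] .
    finally have "g * z - (\<Sum>i<k. (g * x i) * us i) \<in> W" .
    moreover have "\<forall>i<k. g * x i \<in> I \<and> us i \<in> U" using h(1) ideal2_multL[OF I g] by auto
    ultimately show "g * z \<in> Z" unfolding Zmem
      by (intro exI[of _ k] exI[of _ "\<lambda>i. g * x i"] exI[of _ us]) simp
  qed
  have "x0 * u0 \<in> Z" unfolding Zmem
    by (intro exI[of _ 1] exI[of _ "\<lambda>_. x0"] exI[of _ "\<lambda>_. u0"]) (simp add: x0 u0 submod_0[OF W])
  hence "Z \<noteq> W" using x0u0 by blast
  hence "Z = U" using simple[OF Zs WZ ZU] by blast
  thus ?thesis using u unfolding Zmem[symmetric] by simp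
qed

lemma F1_core:
  fixes n :: nat and e :: "nat \<Rightarrow> 'a"
  assumes W: "submod W" and U: "submod U" and WU: "W \<subseteq> U"
    and simple: "\<And>Z. submod Z \<Longrightarrow> W \<subseteq> Z \<Longrightarrow> Z \<subseteq> U \<Longrightarrow> Z = W \<or> Z = U"
    and I: "ideal2 G I" and x0: "x0 \<in> I" and u0: "u0 \<in> U" and x0u0: "x0 * u0 \<notin> W"
    and e: "\<forall>j<n. e j \<in> U"
  shows "\<exists>X\<in>I. \<forall>j<n. e j - X * e j \<in> W"
proof -
  have IG: "\<And>x. x \<in> I \<Longrightarrow> x \<in> G" using ideal2_sub[OF I] .
  define Y where "Y = {y. \<exists>g\<in>G. \<forall>j<n. y j - g * e j \<in> W}"
  have Ymem: "y \<in> Y \<longleftrightarrow> (\<exists>g\<in>G. \<forall>j<n. y j - g * e j \<in> W)" for y unfolding Y_def by simp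
  define inIY where "inIY y \<longleftrightarrow> (\<exists>(k::nat) x ys. (\<forall>i<k. x i \<in> I \<and> ys i \<in> Y) \<and>
      (\<forall>j<n. y j - (\<Sum>i<k. x i * ys i j) \<in> W))" for y
  have Y_U: "y j \<in> U" if yY: "y \<in> Y" and jn: "j < n" for y j
  proof -
    obtain g where g: "g \<in> G" "\<forall>j<n. y j - g * e j \<in> W" using yY unfolding Ymem by blast
    have "y j = (y j - g * e j) + g * e j" by simp
    also have "\<dots> \<in> U" using submod_add[OF U] g WU submod_mult[OF U g(1)] e jn by blast
    finally show ?thesis .
  qed
  have Ydiff: "(\<lambda>j. y1 j - y2 j) \<in> Y" if y1Y: "y1 \<in> Y" and y2Y: "y2 \<in> Y" for y1 y2
  proof -
    obtain g1 where g1: "g1 \<in> G" "\<forall>j<n. y1 j - g1 * e j \<in> W" using y1Y unfolding Ymem by blast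
    obtain g2 where g2: "g2 \<in> G" "\<forall>j<n. y2 j - g2 * e j \<in> W" using y2Y unfolding Ymem by blast
    have "\<forall>j<n. (y1 j - y2 j) - (g1 - g2) * e j \<in> W"
    proof (intro allI impI)
      fix j assume j: "j < n"
      have eq: "(y1 j - y2 j) - (g1 - g2) * e j = (y1 j - g1 * e j) - (y2 j - g2 * e j)"
        by (simp add: algebra_simps)
      have a: "y1 j - g1 * e j \<in> W" using g1(2) j by blast
      have b: "y2 j - g2 * e j \<in> W" using g2(2) j by blast
      show "(y1 j - y2 j) - (g1 - g2) * e j \<in> W" unfolding eq by (rule submod_diff[OF W a b])
    qed
    thus ?thesis unfolding Ymem using Gdiff[OF g1(1) g2(1)] by blast
  qed
  have Ysum: "(\<lambda>j. \<Sum>i<k. x i * ys i j) \<in> Y" if "\<forall>i<k. x i \<in> G \<and> ys i \<in> Y" for k :: nat and x ys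
    using that
  proof (induction k)
    case 0
    show ?case unfolding Ymem by (intro bexI[of _ 0]) (simp_all add: submod_0[OF W] G0)
  next
    case (Suc k)
    obtain g where g: "g \<in> G" "\<forall>j<n. (\<Sum>i<k. x i * ys i j) - g * e j \<in> W"
      using Suc by (auto simp: Ymem)
    obtain h where h: "h \<in> G" "\<forall>j<n. ys k j - h * e j \<in> W"
      using Suc(2) unfolding Ymem by auto
    have xk: "x k \<in> G" using Suc(2) by auto
    have "\<forall>j<n. (\<Sum>i<Suc k. x i * ys i j) - (g + x k * h) * e j \<in> W"
    proof (intro allI impI)
      fix j assume j: "j < n"
      have eq: "(\<Sum>i<Suc k. x i * ys i j) - (g + x k * h) * e j
          = ((\<Sum>i<k. x i * ys i j) - g * e j) + x k * (ys k j - h * e j)"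
        by (simp add: algebra_simps mult.assoc)
      have a: "(\<Sum>i<k. x i * ys i j) - g * e j \<in> W" using g(2) j by blast
      have b: "x k * (ys k j - h * e j) \<in> W" using submod_mult[OF W xk] h(2) j by blast
      show "(\<Sum>i<Suc k. x i * ys i j) - (g + x k * h) * e j \<in> W"
        unfolding eq by (rule submod_add[OF W a b])
    qed
    thus ?case unfolding Ymem using Gadd[OF g(1) Gmult[OF xk h(1)]] by blast
  qed
  have claim: "\<forall>y\<in>Y. (\<forall>j. m \<le> j \<and> j < n \<longrightarrow> y j \<in> W) \<longrightarrow> inIY y" if "m \<le> n" for m
    using that
  proof (induction m)
    case 0
    show ?case
    proof (intro ballI impI)
      fix y assume "y \<in> Y" "\<forall>j. 0 \<le> j \<and> j < n \<longrightarrow> y j \<in> W"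
      thus "inIY y" unfolding inIY_def by (intro exI[of _ 0]) simp
    qed
  next
    case (Suc m)
    have mn: "m < n" using Suc(2) by simp
    have IH: "\<forall>y\<in>Y. (\<forall>j. m \<le> j \<and> j < n \<longrightarrow> y j \<in> W) \<longrightarrow> inIY y" using Suc by simp
    define Ym where "Ym = {y\<in>Y. \<forall>j. Suc m \<le> j \<and> j < n \<longrightarrow> y j \<in> W}"
    define Z where "Z = {z. \<exists>y'\<in>Ym. z - y' m \<in> W}"
    have Zmem: "z \<in> Z \<longleftrightarrow> (\<exists>y'\<in>Ym. z - y' m \<in> W)" for z unfolding Z_def by simp
    have Ym_diff: "(\<lambda>j. y1 j - y2 j) \<in> Ym" if "y1 \<in> Ym" "y2 \<in> Ym" for y1 y2
      using that Ydiff submod_diff[OF W] unfolding Ym_def by auto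
    have Ym_mult: "(\<lambda>j. g * y1 j) \<in> Ym" if y1Y: "y1 \<in> Ym" and g: "g \<in> G" for y1 g
    proof -
      obtain g1 where g1: "g1 \<in> G" "\<forall>j<n. y1 j - g1 * e j \<in> W" using y1Y unfolding Ym_def Ymem by blast
      have "\<forall>j<n. g * y1 j - (g * g1) * e j \<in> W"
      proof (intro allI impI)
        fix j assume j: "j < n"
        have eq: "g * y1 j - (g * g1) * e j = g * (y1 j - g1 * e j)" by (simp add: algebra_simps mult.assoc)
        have a: "y1 j - g1 * e j \<in> W" using g1(2) j by blast
        show "g * y1 j - (g * g1) * e j \<in> W" unfolding eq by (rule submod_mult[OF W g a])
      qed
      hence "(\<lambda>j. g * y1 j) \<in> Y" unfolding Ymem using Gmult[OF g g1(1)] by blast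
      thus ?thesis using y1Y submod_mult[OF W g] unfolding Ym_def by auto
    qed
    have zero: "(\<lambda>j. 0) \<in> Ym" unfolding Ym_def Ymem using G0 submod_0[OF W]
      by (auto intro!: bexI[of _ 0])
    have Zs: "submod Z" unfolding submod_def
    proof (intro conjI ballI)
      show "0 \<in> Z" unfolding Zmem using zero submod_0[OF W] by (intro bexI[of _ "\<lambda>j. 0"]) auto
    next
      fix z1 z2 assume "z1 \<in> Z" "z2 \<in> Z"
      then obtain y1 y2 where y: "y1 \<in> Ym" "z1 - y1 m \<in> W" "y2 \<in> Ym" "z2 - y2 m \<in> W" unfolding Zmem by blast
      have ny2: "(\<lambda>j. 0 - y2 j) \<in> Ym" using Ym_diff[OF zero y(3)] .
      have s: "(\<lambda>j. y1 j - (0 - y2 j)) \<in> Ym" using Ym_diff[OF y(1) ny2] .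
      have eq: "(z1 + z2) - (y1 m - (0 - y2 m)) = (z1 - y1 m) + (z2 - y2 m)" by (simp add: algebra_simps)
      have "(z1 + z2) - (y1 m - (0 - y2 m)) \<in> W" unfolding eq by (rule submod_add[OF W y(2) y(4)])
      thus "z1 + z2 \<in> Z" unfolding Zmem by (intro bexI[OF _ s]) simp
    next
      fix z assume "z \<in> Z"
      then obtain y1 where y: "y1 \<in> Ym" "z - y1 m \<in> W" unfolding Zmem by blast
      have ny: "(\<lambda>j. 0 - y1 j) \<in> Ym" using Ym_diff[OF zero y(1)] .
      have eq: "- z - (0 - y1 m) = - (z - y1 m)" by simp
      have "- z - (0 - y1 m) \<in> W" unfolding eq by (rule submod_neg[OF W y(2)])
      thus "- z \<in> Z" unfolding Zmem by (intro bexI[OF _ ny]) simp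
    next
      fix g z assume g: "g \<in> G" and "z \<in> Z"
      then obtain y1 where y: "y1 \<in> Ym" "z - y1 m \<in> W" unfolding Zmem by blast
      have gy: "(\<lambda>j. g * y1 j) \<in> Ym" using Ym_mult[OF y(1) g] .
      have eq: "g * z - g * y1 m = g * (z - y1 m)" by (simp add: right_diff_distrib)
      have "g * z - g * y1 m \<in> W" unfolding eq by (rule submod_mult[OF W g y(2)])
      thus "g * z \<in> Z" unfolding Zmem by (intro bexI[OF _ gy]) simp
    qed
    have WZ: "W \<subseteq> Z"
    proof
      fix w assume "w \<in> W" thus "w \<in> Z" unfolding Zmem by (intro bexI[OF _ zero]) simp
    qed
    have ZU: "Z \<subseteq> U"
    proof
      fix z assume "z \<in> Z"
      then obtain y1 where y: "y1 \<in> Ym" "z - y1 m \<in> W" unfolding Zmem by blast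
      have "y1 m \<in> U" using Y_U[of y1 m] y(1) mn unfolding Ym_def by simp
      hence "(z - y1 m) + y1 m \<in> U" using submod_add[OF U] y(2) WU by blast
      thus "z \<in> U" by simp
    qed
    show ?case
    proof (intro ballI impI)
      fix y assume yY: "y \<in> Y" and yW: "\<forall>j. Suc m \<le> j \<and> j < n \<longrightarrow> y j \<in> W"
      have yYm: "y \<in> Ym" unfolding Ym_def using yY yW by simp
      have ymZ: "y m \<in> Z" unfolding Zmem using yYm submod_0[OF W] by (intro bexI[of _ y]) simp_all
      from simple[OF Zs WZ ZU] show "inIY y"
      proof
        assume "Z = W"
        hence "y m \<in> W" using ymZ by simp
        have "\<forall>j. m \<le> j \<and> j < n \<longrightarrow> y j \<in> W"
        proof (intro allI impI)
          fix j assume j: "m \<le> j \<and> j < n"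
          show "y j \<in> W"
          proof (cases "j = m")
            case True thus ?thesis using \<open>y m \<in> W\<close> by simp
          next
            case False hence "Suc m \<le> j" using j by simp
            thus ?thesis using yW j by simp
          qed
        qed
        thus "inIY y" using IH yY by simp
      next
        assume ZU': "Z = U"
        have ymU: "y m \<in> U" using Y_U[OF yY mn] .
        obtain x us and k :: nat where gen: "\<forall>i<k. x i \<in> I \<and> us i \<in> U" "y m - (\<Sum>i<k. x i * us i) \<in> W"
          using gen_by_ideal[OF W U WU simple I x0 u0 x0u0 ymU] by blast
        have "\<forall>i. \<exists>y'. i < k \<longrightarrow> y' \<in> Ym \<and> us i - y' m \<in> W"
        proof
          fix i show "\<exists>y'. i < k \<longrightarrow> y' \<in> Ym \<and> us i - y' m \<in> W"
          proof (cases "i < k")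
            case True
            hence "us i \<in> Z" using gen(1) ZU' by simp
            then obtain y' where "y' \<in> Ym" "us i - y' m \<in> W" unfolding Zmem by blast
            thus ?thesis by blast
          next
            case False thus ?thesis by simp
          qed
        qed
        then obtain ys where ys: "\<And>i. i < k \<Longrightarrow> ys i \<in> Ym \<and> us i - ys i m \<in> W" by metis
        define z where "z j = (\<Sum>i<k. x i * ys i j)" for j
        have zY: "z \<in> Y" unfolding z_def using ys gen(1) IG unfolding Ym_def by (intro Ysum) auto
        define y' where "y' j = y j - z j" for j
        have y'Y: "y' \<in> Y" unfolding y'_def using Ydiff[OF yY zY] by simp
        have zW: "z j \<in> W" if "Suc m \<le> j" "j < n" for j
          unfolding z_def using ys that gen(1) IG unfolding Ym_def
          by (intro submod_sum[OF W] submod_mult[OF W]) auto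
        have y'W: "\<forall>j. m \<le> j \<and> j < n \<longrightarrow> y' j \<in> W"
        proof (intro allI impI)
          fix j assume j: "m \<le> j \<and> j < n"
          show "y' j \<in> W"
          proof (cases "j = m")
            case True
            have "y' m = (y m - (\<Sum>i<k. x i * us i)) + (\<Sum>i<k. x i * (us i - ys i m))"
              unfolding y'_def z_def by (simp add: algebra_simps sum_subtractf)
            also have "\<dots> \<in> W" using gen ys IG
              by (intro submod_add[OF W] submod_sum[OF W] submod_mult[OF W]) auto
            finally show ?thesis using True by simp
          next
            case False
            hence "Suc m \<le> j" using j by simp
            thus ?thesis unfolding y'_def using yW zW j submod_diff[OF W] by simp
          qed
        qed
        have "inIY y'" using IH y'Y y'W by simp
        then obtain x' ys' and k' :: nat where h': "\<forall>i<k'. x' i \<in> I \<and> ys' i \<in> Y"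
          "\<forall>j<n. y' j - (\<Sum>i<k'. x' i * ys' i j) \<in> W"
          unfolding inIY_def by blast
        define x2 where "x2 i = (if i < k' then x' i else x (i - k'))" for i
        define ys2 where "ys2 i = (if i < k' then ys' i else ys (i - k'))" for i
        have sum2: "(\<Sum>i<k'+k. x2 i * ys2 i j) = (\<Sum>i<k'. x' i * ys' i j) + z j" for j
        proof -
          have "(\<Sum>i<k'+k. x2 i * ys2 i j) = (\<Sum>i<k'+k. (if i < k' then x' i else x (i - k')) *
                 (if i < k' then ys' i j else ys (i - k') j))"
            unfolding x2_def ys2_def by (intro sum.cong) auto
          also have "\<dots> = (\<Sum>i<k'. x' i * ys' i j) + (\<Sum>i<k. x i * ys i j)"
            by (rule sum_concat_mult)
          finally show ?thesis unfolding z_def .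
        qed
        have A: "\<forall>i<k'+k. x2 i \<in> I \<and> ys2 i \<in> Y"
        proof (intro allI impI)
          fix i assume "i < k' + k"
          thus "x2 i \<in> I \<and> ys2 i \<in> Y" using h'(1) gen(1) ys unfolding x2_def ys2_def Ym_def by auto
        qed
        have B: "\<forall>j<n. y j - (\<Sum>i<k'+k. x2 i * ys2 i j) \<in> W"
        proof (intro allI impI)
          fix j assume j: "j < n"
          have "y j - (\<Sum>i<k'+k. x2 i * ys2 i j) = y' j - (\<Sum>i<k'. x' i * ys' i j)"
            unfolding sum2 y'_def by simp
          thus "y j - (\<Sum>i<k'+k. x2 i * ys2 i j) \<in> W" using h'(2) j by simp
        qed
        show "inIY y" unfolding inIY_def using A B by blast
      qed
    qed
  qed
  have eY: "e \<in> Y" unfolding Ymem using G1 submod_0[OF W] by (intro bexI[of _ 1]) simp_all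
  have triv: "\<forall>j. n \<le> j \<and> j < n \<longrightarrow> e j \<in> W" by auto
  have "inIY e" using claim[of n] eY triv by blast
  then obtain x ys and k :: nat where h: "\<forall>i<k. x i \<in> I \<and> ys i \<in> Y" "\<forall>j<n. e j - (\<Sum>i<k. x i * ys i j) \<in> W"
    unfolding inIY_def by blast
  have "\<forall>i. \<exists>g. i < k \<longrightarrow> g \<in> G \<and> (\<forall>j<n. ys i j - g * e j \<in> W)"
    using h(1) unfolding Ymem by blast
  then obtain gs where gs: "\<And>i. i < k \<Longrightarrow> gs i \<in> G \<and> (\<forall>j<n. ys i j - gs i * e j \<in> W)" by metis
  define X where "X = (\<Sum>i<k. x i * gs i)"
  have XI: "X \<in> I" unfolding X_def using h(1) gs
    by (intro ideal2_sum[OF I] ideal2_multR[OF I]) auto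
  have "\<forall>j<n. e j - X * e j \<in> W"
  proof (intro allI impI)
    fix j assume j: "j < n"
    have "e j - X * e j = (e j - (\<Sum>i<k. x i * ys i j)) + (\<Sum>i<k. x i * (ys i j - gs i * e j))"
      unfolding X_def by (simp add: algebra_simps sum_subtractf sum_distrib_right mult.assoc)
    also have "\<dots> \<in> W" using h gs j IG
      by (intro submod_add[OF W] submod_sum[OF W] submod_mult[OF W]) auto
    finally show "e j - X * e j \<in> W" .
  qed
  thus ?thesis using XI by blast
qed

lemma lsum_mult: "g * lsum d c e = lsum d c (\<lambda>j. g * e j)"
  unfolding lsum_def by (simp add: sum_distrib_left smul_mult_right)

lemma lsum_in: "submod W \<Longrightarrow> (\<And>j. j < d \<Longrightarrow> e j \<in> W) \<Longrightarrow> lsum d c e \<in> W"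
  unfolding lsum_def by (intro submod_sum submod_smul) auto

lemma ann_max:
  assumes W: "submod W" and U: "submod U" and sq: "simpq U W"
    and sp: "U \<subseteq> modspan F W" and fin: "finite F"
    and I: "ideal2 G I" and sub: "ann U W \<subseteq> I" and ne: "I \<noteq> ann U W"
  shows "I = G"
proof (rule ccontr)
  assume IG: "I \<noteq> G"
  have WU: "W \<subseteq> U" using sq unfolding simpq_def by simp
  have simple: "\<And>Z. submod Z \<Longrightarrow> W \<subseteq> Z \<Longrightarrow> Z \<subseteq> U \<Longrightarrow> Z = W \<or> Z = U"
    using sq unfolding simpq_def by blast
  obtain F' where F': "finite F'" "F' \<subseteq> U" "U \<subseteq> modspan F' W"
    using fdq_inside[OF submod_subspace[OF U] WU sp fin] by blast
  obtain n e where qb: "qbasis U W n e"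
    using qbasis_exists[OF submod_subspace[OF W] F'] by blast
  have eU: "\<forall>j<n. e j \<in> U" using qb unfolding qbasis_def by blast
  obtain x0 where x0: "x0 \<in> I" "x0 \<notin> ann U W" using sub ne by blast
  have x0G: "x0 \<in> G" using ideal2_sub[OF I x0(1)] .
  obtain u0 where u0: "u0 \<in> U" "x0 * u0 \<notin> W" using x0 x0G unfolding ann_def by blast
  obtain X where X: "X \<in> I" "\<forall>j<n. e j - X * e j \<in> W"
    using F1_core[OF W U WU simple I x0(1) u0 eU] by blast
  have XG: "X \<in> G" using ideal2_sub[OF I X(1)] .
  have "1 - X \<in> ann U W" unfolding ann_def
  proof (intro CollectI conjI ballI)
    show "1 - X \<in> G" using Gdiff[OF G1 XG] .
    fix u assume u: "u \<in> U"
    then obtain c where c: "u - lsum n c e \<in> W" using qb unfolding qbasis_def by blast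
    have "(1 - X) * u = (1 - X) * ((u - lsum n c e) + lsum n c e)" by simp
    also have "\<dots> = (1 - X) * (u - lsum n c e) + (1 - X) * lsum n c e" by (rule distrib_left)
    finally have eq: "(1 - X) * u = (1 - X) * (u - lsum n c e) + lsum n c (\<lambda>j. (1 - X) * e j)"
      by (simp only: lsum_mult)
    have a: "(1 - X) * (u - lsum n c e) \<in> W" using submod_mult[OF W Gdiff[OF G1 XG] c] .
    have b: "lsum n c (\<lambda>j. (1 - X) * e j) \<in> W"
      using X(2) by (intro lsum_in[OF W]) (simp add: algebra_simps)
    show "(1 - X) * u \<in> W" unfolding eq by (rule submod_add[OF W a b])
  qed
  hence "1 - X \<in> I" using sub by blast
  hence "(1 - X) + X \<in> I" using ideal2_add[OF I _ X(1)] by blast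
  hence "1 \<in> I" by simp
  thus False using one_not_ideal[OF I IG] by simp
qed

lemma ann_fin:
  assumes W: "submod W" and U: "submod U" and qb: "qbasis U W n e"
    and sp: "U \<subseteq> modspan F W" and fin: "finite F"
  shows "findim_quot smul G (ann U W)"
proof -
  have eU: "\<forall>j<n. e j \<in> U" using qb unfolding qbasis_def by blast
  define K where "K j = {g\<in>G. \<forall>i<j. g * e i \<in> W}" for j
  have Kmem: "g \<in> K j \<longleftrightarrow> g \<in> G \<and> (\<forall>i<j. g * e i \<in> W)" for g j unfolding K_def by simp
  have Ksub: "vs.subspace (K j)" for j
    unfolding vs.subspace_def
  proof (intro conjI ballI allI)
    show "0 \<in> K j" unfolding Kmem using G0 submod_0[OF W] by simp
  next
    fix x y assume x: "x \<in> K j" and y: "y \<in> K j"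
    have "x + y \<in> G" using Gadd x y unfolding Kmem by blast
    moreover have "\<forall>i<j. (x + y) * e i \<in> W"
    proof (intro allI impI)
      fix i assume i: "i < j"
      have "x * e i + y * e i \<in> W" using submod_add[OF W] x y i unfolding Kmem by blast
      thus "(x + y) * e i \<in> W" by (simp add: distrib_right)
    qed
    ultimately show "x + y \<in> K j" unfolding Kmem by blast
  next
    fix c x assume x: "x \<in> K j"
    have "smul c x \<in> G" using Gsmul x unfolding Kmem by blast
    moreover have "\<forall>i<j. smul c x * e i \<in> W"
    proof (intro allI impI)
      fix i assume i: "i < j"
      have "smul c (x * e i) \<in> W" using submod_smul[OF W] x i unfolding Kmem by blast
      thus "smul c x * e i \<in> W" by (simp add: smul_mult_left)
    qed
    ultimately show "smul c x \<in> K j" unfolding Kmem by blast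
  qed
  have claim: "\<exists>E. finite E \<and> E \<subseteq> G \<and> (\<forall>g\<in>G. \<exists>y\<in>vs.span E. g - y \<in> K j)" if "j \<le> n" for j
    using that
  proof (induction j)
    case 0
    show ?case
    proof (intro exI[of _ "{}"] conjI ballI)
      fix g assume "g \<in> G"
      thus "\<exists>y\<in>vs.span {}. g - y \<in> K 0" unfolding Kmem by (intro bexI[of _ 0]) auto
    qed auto
  next
    case (Suc j)
    have jn: "j < n" using Suc(2) by simp
    have "\<exists>E. finite E \<and> E \<subseteq> G \<and> (\<forall>g\<in>G. \<exists>y\<in>vs.span E. g - y \<in> K j)"
      using Suc(1) jn by simp
    then obtain E where E: "finite E" "E \<subseteq> G" "\<forall>g\<in>G. \<exists>y\<in>vs.span E. g - y \<in> K j" by blast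
    have Kj: "vs.subspace (K j)" by (rule Ksub)
    have img: "(\<lambda>g. g * e j) ` K j \<subseteq> modspan F W"
    proof
      fix z assume "z \<in> (\<lambda>g. g * e j) ` K j"
      then obtain g where g: "g \<in> K j" "z = g * e j" by blast
      have "g \<in> G" using g(1) unfolding Kmem by blast
      hence "z \<in> U" using submod_mult[OF U] eU jn g(2) by simp
      thus "z \<in> modspan F W" using sp by blast
    qed
    have pa: "\<And>x y. (x + y) * e j = x * e j + y * e j" by (simp add: distrib_right)
    have ps: "\<And>c x. smul c x * e j = smul c (x * e j)" by (simp add: smul_mult_left)
    have "\<exists>E. finite E \<and> E \<subseteq> K j \<and> (\<forall>x\<in>K j. \<exists>y\<in>vs.span E. (x - y) * e j \<in> W)"
      by (rule fincodim_pullback[OF Kj submod_subspace[OF W] fin, of "\<lambda>g. g * e j", OF pa ps img])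
    then obtain E' where E': "finite E'" "E' \<subseteq> K j" "\<forall>x\<in>K j. \<exists>y\<in>vs.span E'. (x - y) * e j \<in> W"
      by blast
    have spE': "vs.span E' \<subseteq> K j" using vs.span_minimal[OF E'(2) Kj] .
    have E'G: "E' \<subseteq> G" using E'(2) unfolding K_def by blast
    show ?case
    proof (intro exI[of _ "E \<union> E'"] conjI ballI)
      show "finite (E \<union> E')" using E(1) E'(1) by simp
      show "E \<union> E' \<subseteq> G" using E(2) E'G by simp
      fix g assume g: "g \<in> G"
      obtain y1 where y1: "y1 \<in> vs.span E" "g - y1 \<in> K j" using E(3) g by blast
      obtain y2 where y2: "y2 \<in> vs.span E'" "(g - y1 - y2) * e j \<in> W" using E'(3) y1(2) by blast
      have gK: "g - y1 - y2 \<in> K j" using vs.subspace_diff[OF Kj y1(2)] spE' y2(1) by blast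
      have "g - (y1 + y2) \<in> K (Suc j)" unfolding Kmem
      proof (intro conjI allI impI)
        show "g - (y1 + y2) \<in> G" using gK unfolding Kmem by (simp add: diff_diff_eq)
        fix i assume i: "i < Suc j"
        show "(g - (y1 + y2)) * e i \<in> W"
        proof (cases "i = j")
          case True thus ?thesis using y2(2) by (simp add: diff_diff_eq)
        next
          case False hence "i < j" using i by simp
          thus ?thesis using gK unfolding Kmem by (simp add: diff_diff_eq)
        qed
      qed
      moreover have "y1 + y2 \<in> vs.span (E \<union> E')"
        using vs.span_add vs.span_mono[of E "E \<union> E'"] vs.span_mono[of E' "E \<union> E'"] y1(1) y2(1) by blast
      ultimately show "\<exists>y\<in>vs.span (E \<union> E'). g - y \<in> K (Suc j)" by blast
    qed
  qed
  obtain E where E: "finite E" "E \<subseteq> G" "\<forall>g\<in>G. \<exists>y\<in>vs.span E. g - y \<in> K n"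
    using claim[OF order_refl] by blast
  have Kann: "K n \<subseteq> ann U W"
  proof
    fix g assume g: "g \<in> K n"
    have gG: "g \<in> G" using g unfolding K_def by simp
    show "g \<in> ann U W" unfolding ann_def
    proof (intro CollectI conjI ballI)
      show "g \<in> G" by fact
      fix u assume "u \<in> U"
      then obtain c where c: "u - lsum n c e \<in> W" using qb unfolding qbasis_def by blast
      have "g * u = g * ((u - lsum n c e) + lsum n c e)" by simp
      also have "\<dots> = g * (u - lsum n c e) + g * lsum n c e" by (rule distrib_left)
      finally have eq: "g * u = g * (u - lsum n c e) + lsum n c (\<lambda>j. g * e j)"
        by (simp only: lsum_mult)
      have a: "g * (u - lsum n c e) \<in> W" using submod_mult[OF W gG c] .
      have b: "lsum n c (\<lambda>j. g * e j) \<in> W" using g unfolding K_def by (intro lsum_in[OF W]) auto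
      show "g * u \<in> W" unfolding eq by (rule submod_add[OF W a b])
    qed
  qed
  have "\<forall>g\<in>G. \<exists>y\<in>vs.span E. g - y \<in> ann U W"
  proof
    fix g assume "g \<in> G"
    then obtain y where "y \<in> vs.span E" "g - y \<in> K n" using E(3) by blast
    thus "\<exists>y\<in>vs.span E. g - y \<in> ann U W" using Kann by blast
  qed
  thus ?thesis unfolding findim_quot_def using E(1,2) by blast
qed

lemma ann_cfs:
  assumes W: "submod W" and U: "submod U" and sq: "simpq U W"
    and sp: "U \<subseteq> modspan F W" and fin: "finite F"
  shows "ann U W \<in> cfs smul G"
proof -
  have WU: "W \<subseteq> U" using sq unfolding simpq_def by simp
  obtain F' where F': "finite F'" "F' \<subseteq> U" "U \<subseteq> modspan F' W"
    using fdq_inside[OF submod_subspace[OF U] WU sp fin] by blast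
  obtain n e where qb: "qbasis U W n e"
    using qbasis_exists[OF submod_subspace[OF W] F'] by blast
  have Ai: "ideal2 G (ann U W)" using ann_ideal[OF U W] .
  have ne: "ann U W \<noteq> G"
  proof
    assume "ann U W = G"
    hence "1 \<in> ann U W" using G1 by simp
    hence "U \<subseteq> W" unfolding ann_def by auto
    thus False using sq unfolding simpq_def by auto
  qed
  have fq: "findim_quot smul G (ann U W)" using ann_fin[OF W U qb sp fin] .
  have mx: "\<forall>I. ideal2 G I \<and> ann U W \<subseteq> I \<longrightarrow> I = ann U W \<or> I = G"
  proof (intro allI impI)
    fix I assume I: "ideal2 G I \<and> ann U W \<subseteq> I"
    show "I = ann U W \<or> I = G"
      using ann_max[OF W U sq sp fin conjunct1[OF I] conjunct2[OF I]] by blast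
  qed
  show ?thesis unfolding cfs_def using Ai ne fq mx by blast
qed

end

context hcb
begin

lemma lsum_add_coef: "lsum d (\<lambda>j. a j + b j) e = lsum d a e + lsum d b e"
  unfolding lsum_def by (simp add: vs.scale_left_distrib sum.distrib)

lemma lsum_diff_coef: "lsum d (\<lambda>j. a j - b j) e = lsum d a e - lsum d b e"
  unfolding lsum_def by (simp add: vs.scale_left_diff_distrib sum_subtractf)

lemma lsum_diff_fun: "lsum d c (\<lambda>j. a j - b j) = lsum d c a - lsum d c b"
  unfolding lsum_def by (simp add: vs.scale_right_diff_distrib sum_subtractf)

lemma lsum_add_fun: "lsum d c (\<lambda>j. a j + b j) = lsum d c a + lsum d c b"
  unfolding lsum_def by (simp add: vs.scale_right_distrib sum.distrib)

lemma lsum_smul: "smul k (lsum d c e) = lsum d (\<lambda>j. k * c j) e"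
  unfolding lsum_def by (simp add: vs.scale_sum_right)

lemma lsum_cong: "(\<And>j. j < d \<Longrightarrow> a j = b j) \<Longrightarrow> (\<And>j. j < d \<Longrightarrow> e j = f j) \<Longrightarrow> lsum d a e = lsum d b f"
  unfolding lsum_def by (intro sum.cong) auto

lemma lsum_zero: "lsum d (\<lambda>j. 0) e = 0"
  unfolding lsum_def by simp

lemma lsum_lsum: "lsum d b (\<lambda>l. lsum d' (\<lambda>i. a i l) e) = lsum d' (\<lambda>i. \<Sum>l<d. a i l * b l) e"
  unfolding lsum_def
  by (simp add: vs.scale_sum_right vs.scale_sum_left sum.swap[of _ "{..<d}"] mult.commute)

lemma lsum_concat:
  "lsum (p + q) (\<lambda>i. if i < p then a i else b (i - p)) (\<lambda>i. if i < p then t i else s (i - p))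
    = lsum p a t + lsum q b s"
proof -
  have "lsum (p + q) (\<lambda>i. if i < p then a i else b (i - p)) (\<lambda>i. if i < p then t i else s (i - p))
     = (\<Sum>i<p+q. if i < p then smul (a i) (t i) else smul (b (i - p)) (s (i - p)))"
    unfolding lsum_def by (intro sum.cong) auto
  also have "\<dots> = lsum p a t + lsum q b s" unfolding lsum_def by (rule sum_concat)
  finally show ?thesis .
qed

definition crd :: "'a set \<Rightarrow> nat \<Rightarrow> (nat \<Rightarrow> 'a) \<Rightarrow> 'a \<Rightarrow> nat \<Rightarrow> 'k" where
  "crd W d e u = (SOME c. (\<forall>j. d \<le> j \<longrightarrow> c j = 0) \<and> u - lsum d c e \<in> W)"

definition rho :: "'a set \<Rightarrow> nat \<Rightarrow> (nat \<Rightarrow> 'a) \<Rightarrow> 'a \<Rightarrow> nat \<Rightarrow> nat \<Rightarrow> 'k" where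
  "rho W d e g i j = crd W d e (g * e j) i"

lemma crd_spec:
  assumes qb: "qbasis U W d e" and u: "u \<in> U"
  shows "(\<forall>j. d \<le> j \<longrightarrow> crd W d e u j = 0) \<and> u - lsum d (crd W d e u) e \<in> W"
proof -
  obtain c where c: "u - lsum d c e \<in> W" using qb u unfolding qbasis_def by blast
  define c' where "c' j = (if j < d then c j else 0)" for j
  have "lsum d c' e = lsum d c e" unfolding c'_def by (rule lsum_cong) auto
  hence "(\<forall>j. d \<le> j \<longrightarrow> c' j = 0) \<and> u - lsum d c' e \<in> W" using c unfolding c'_def by auto
  thus ?thesis unfolding crd_def
    by (rule someI[where P="\<lambda>c. (\<forall>j. d \<le> j \<longrightarrow> c j = 0) \<and> u - lsum d c e \<in> W"])
qed

lemma crd_unique: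
  assumes W: "submod W" and qb: "qbasis U W d e" and u: "u \<in> U" and c: "u - lsum d c e \<in> W"
    and j: "j < d"
  shows "crd W d e u j = c j"
proof -
  have s: "u - lsum d (crd W d e u) e \<in> W" using crd_spec[OF qb u] by blast
  have "lsum d (\<lambda>j. crd W d e u j - c j) e = (u - lsum d c e) - (u - lsum d (crd W d e u) e)"
    unfolding lsum_diff_coef by simp
  also have "\<dots> \<in> W" using submod_diff[OF W c s] .
  finally have "lsum d (\<lambda>j. crd W d e u j - c j) e \<in> W" .
  hence "crd W d e u j - c j = 0" using qb j unfolding qbasis_def by blast
  thus ?thesis by simp
qed

lemma crd_eq:
  assumes W: "submod W" and qb: "qbasis U W d e" and u: "u \<in> U" and c: "u - lsum d c e \<in> W"
    and cz: "\<forall>j. d \<le> j \<longrightarrow> c j = 0"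
  shows "crd W d e u = c"
proof
  fix j show "crd W d e u j = c j"
  proof (cases "j < d")
    case True thus ?thesis using crd_unique[OF W qb u c] by simp
  next
    case False thus ?thesis using crd_spec[OF qb u] cz by simp
  qed
qed

lemma rho_spec:
  assumes qb: "qbasis U W d e" and U: "submod U" and g: "g \<in> G" and j: "j < d"
  shows "g * e j - lsum d (\<lambda>i. rho W d e g i j) e \<in> W"
proof -
  have "g * e j \<in> U" using submod_mult[OF U g] qb j unfolding qbasis_def by blast
  thus ?thesis using crd_spec[OF qb] unfolding rho_def by blast
qed

lemma rho_unique:
  assumes W: "submod W" and qb: "qbasis U W d e" and U: "submod U" and g: "g \<in> G" and j: "j < d"
    and c: "g * e j - lsum d c e \<in> W" and i: "i < d"
  shows "rho W d e g i j = c i"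
proof -
  have "g * e j \<in> U" using submod_mult[OF U g] qb j unfolding qbasis_def by blast
  thus ?thesis unfolding rho_def using crd_unique[OF W qb _ c i] by blast
qed

lemma qbasis_in: "qbasis U W d e \<Longrightarrow> j < d \<Longrightarrow> e j \<in> U"
  unfolding qbasis_def by blast

lemma lsum_in_U: "submod U \<Longrightarrow> qbasis U W d e \<Longrightarrow> lsum d c e \<in> U"
  by (intro lsum_in) (auto intro: qbasis_in)

lemma rep_qbasis:
  assumes W: "submod W" and U: "submod U" and qb: "qbasis U W d e"
  shows "rep smul G d (rho W d e)"
  unfolding rep_def
proof (intro conjI allI ballI impI)
  fix i j assume i: "i < d" and j: "j < d"
  have "1 * e j - lsum d (\<lambda>l. if l = j then 1 else 0) e \<in> W"
  proof -
    have "lsum d (\<lambda>l. if l = j then 1 else 0) e = e j"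
      unfolding lsum_def using j by (simp add: if_distrib[of "\<lambda>c. smul c _"] sum.delta' cong: if_cong)
    thus ?thesis using submod_0[OF W] by simp
  qed
  thus "rho W d e 1 i j = (if i = j then 1 else 0)"
    using rho_unique[OF W qb U G1 j _ i] by auto
next
  fix x y i j assume x: "x \<in> G" and y: "y \<in> G" and i: "i < d" and j: "j < d"
  let ?rx = "\<lambda>i l. rho W d e x i l" and ?ry = "\<lambda>i l. rho W d e y i l"
  have sx: "\<And>l. l < d \<Longrightarrow> x * e l - lsum d (\<lambda>i. ?rx i l) e \<in> W" using rho_spec[OF qb U x] by blast
  have sy: "\<And>l. l < d \<Longrightarrow> y * e l - lsum d (\<lambda>i. ?ry i l) e \<in> W" using rho_spec[OF qb U y] by blast
  have "(x + y) * e j - lsum d (\<lambda>i. ?rx i j + ?ry i j) e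
      = (x * e j - lsum d (\<lambda>i. ?rx i j) e) + (y * e j - lsum d (\<lambda>i. ?ry i j) e)"
    unfolding lsum_add_coef by (simp add: algebra_simps)
  also have "\<dots> \<in> W" using submod_add[OF W sx[OF j] sy[OF j]] .
  finally have "(x + y) * e j - lsum d (\<lambda>i. ?rx i j + ?ry i j) e \<in> W" .
  thus "rho W d e (x + y) i j = rho W d e x i j + rho W d e y i j"
    using rho_unique[OF W qb U Gadd[OF x y] j _ i] by simp
  define b where "b l = ?ry l j" for l
  have eq: "(x * y) * e j - lsum d (\<lambda>i. \<Sum>l<d. ?rx i l * ?ry l j) e
     = x * (y * e j - lsum d b e) + lsum d b (\<lambda>l. x * e l - lsum d (\<lambda>i. ?rx i l) e)"
  proof -
    have "lsum d (\<lambda>i. \<Sum>l<d. ?rx i l * ?ry l j) e = lsum d b (\<lambda>l. lsum d (\<lambda>i. ?rx i l) e)"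
      unfolding b_def by (rule lsum_lsum[symmetric])
    moreover have "x * lsum d b e = lsum d b (\<lambda>l. x * e l)" by (rule lsum_mult)
    ultimately show ?thesis
      by (simp add: lsum_diff_fun right_diff_distrib mult.assoc algebra_simps)
  qed
  have a: "x * (y * e j - lsum d b e) \<in> W" unfolding b_def using submod_mult[OF W x sy[OF j]] .
  have b: "lsum d b (\<lambda>l. x * e l - lsum d (\<lambda>i. ?rx i l) e) \<in> W"
    by (rule lsum_in[OF W]) (rule sx)
  have "(x * y) * e j - lsum d (\<lambda>i. \<Sum>l<d. ?rx i l * ?ry l j) e \<in> W"
    unfolding eq by (rule submod_add[OF W a b])
  thus "rho W d e (x * y) i j = (\<Sum>l<d. rho W d e x i l * rho W d e y l j)"
    using rho_unique[OF W qb U Gmult[OF x y] j _ i] by simp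
next
  fix c x i j assume x: "x \<in> G" and i: "i < d" and j: "j < d"
  have sx: "x * e j - lsum d (\<lambda>i. rho W d e x i j) e \<in> W" using rho_spec[OF qb U x j] .
  have "smul c x * e j - lsum d (\<lambda>i. c * rho W d e x i j) e = smul c (x * e j - lsum d (\<lambda>i. rho W d e x i j) e)"
    by (simp add: smul_mult_left lsum_smul vs.scale_right_diff_distrib)
  also have "\<dots> \<in> W" using submod_smul[OF W sx] .
  finally have "smul c x * e j - lsum d (\<lambda>i. c * rho W d e x i j) e \<in> W" .
  thus "rho W d e (smul c x) i j = c * rho W d e x i j"
    using rho_unique[OF W qb U Gsmul[OF x] j _ i] by simp
qed

lemma crd_zero_beyond: "qbasis U W d e \<Longrightarrow> u \<in> U \<Longrightarrow> d \<le> j \<Longrightarrow> crd W d e u j = 0"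
  using crd_spec by blast

lemma crd_add:
  assumes W: "submod W" and U: "submod U" and qb: "qbasis U W d e" and u: "u \<in> U" and v: "v \<in> U"
  shows "crd W d e (u + v) = (\<lambda>i. crd W d e u i + crd W d e v i)"
proof (rule crd_eq[OF W qb submod_add[OF U u v]])
  have su: "u - lsum d (crd W d e u) e \<in> W" using crd_spec[OF qb u] by blast
  have sv: "v - lsum d (crd W d e v) e \<in> W" using crd_spec[OF qb v] by blast
  have "u + v - lsum d (\<lambda>i. crd W d e u i + crd W d e v i) e
     = (u - lsum d (crd W d e u) e) + (v - lsum d (crd W d e v) e)"
    unfolding lsum_add_coef by (simp add: algebra_simps)
  also have "\<dots> \<in> W" by (rule submod_add[OF W su sv])
  finally show "u + v - lsum d (\<lambda>i. crd W d e u i + crd W d e v i) e \<in> W" .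
  show "\<forall>j. d \<le> j \<longrightarrow> crd W d e u j + crd W d e v j = 0"
    using crd_zero_beyond[OF qb u] crd_zero_beyond[OF qb v] by simp
qed

lemma crd_smul:
  assumes W: "submod W" and U: "submod U" and qb: "qbasis U W d e" and u: "u \<in> U"
  shows "crd W d e (smul k u) = (\<lambda>i. k * crd W d e u i)"
proof (rule crd_eq[OF W qb submod_smul[OF U u]])
  have su: "u - lsum d (crd W d e u) e \<in> W" using crd_spec[OF qb u] by blast
  have "smul k u - lsum d (\<lambda>i. k * crd W d e u i) e = smul k (u - lsum d (crd W d e u) e)"
    by (simp add: lsum_smul vs.scale_right_diff_distrib)
  also have "\<dots> \<in> W" by (rule submod_smul[OF W su])
  finally show "smul k u - lsum d (\<lambda>i. k * crd W d e u i) e \<in> W" .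
  show "\<forall>j. d \<le> j \<longrightarrow> k * crd W d e u j = 0"
    using crd_zero_beyond[OF qb u] by simp
qed

lemma crd_W:
  assumes W: "submod W" and qb: "qbasis U W d e" and WU: "W \<subseteq> U" and w: "w \<in> W"
  shows "crd W d e w = (\<lambda>_. 0)"
  by (rule crd_eq[OF W qb _]) (use w WU in \<open>auto simp: lsum_zero\<close>)

lemma crd_lsum:
  assumes W: "submod W" and U: "submod U" and qb: "qbasis U W d e" and v: "v \<in> vecs d"
  shows "crd W d e (lsum d v e) = v"
  by (rule crd_eq[OF W qb lsum_in_U[OF U qb]]) (use v submod_0[OF W] in \<open>auto simp: vecs_def\<close>)

lemma crd_mult:
  assumes W: "submod W" and U: "submod U" and qb: "qbasis U W d e" and g: "g \<in> G" and u: "u \<in> U"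
  shows "crd W d e (g * u) = mapply d (rho W d e g) (crd W d e u)"
proof (rule crd_eq[OF W qb submod_mult[OF U g u]])
  let ?c = "crd W d e u" and ?r = "rho W d e g"
  have su: "u - lsum d ?c e \<in> W" using crd_spec[OF qb u] by blast
  have sg: "\<And>l. l < d \<Longrightarrow> g * e l - lsum d (\<lambda>i. ?r i l) e \<in> W" using rho_spec[OF qb U g] by blast
  have m: "lsum d (mapply d ?r ?c) e = lsum d ?c (\<lambda>l. lsum d (\<lambda>i. ?r i l) e)"
    unfolding lsum_lsum mapply_def by (rule lsum_cong) auto
  have eq: "g * u - lsum d (mapply d ?r ?c) e
      = g * (u - lsum d ?c e) + lsum d ?c (\<lambda>l. g * e l - lsum d (\<lambda>i. ?r i l) e)"
    unfolding m lsum_diff_fun lsum_mult[symmetric] by (simp add: algebra_simps)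
  have a: "g * (u - lsum d ?c e) \<in> W" using submod_mult[OF W g su] .
  have b: "lsum d ?c (\<lambda>l. g * e l - lsum d (\<lambda>i. ?r i l) e) \<in> W" by (rule lsum_in[OF W]) (rule sg)
  show "g * u - lsum d (mapply d ?r ?c) e \<in> W" unfolding eq by (rule submod_add[OF W a b])
  show "\<forall>j. d \<le> j \<longrightarrow> mapply d ?r ?c j = 0" unfolding mapply_def by simp
qed

lemma crd_in_vecs: "qbasis U W d e \<Longrightarrow> u \<in> U \<Longrightarrow> crd W d e u \<in> vecs d"
  unfolding vecs_def using crd_zero_beyond by blast

lemma simple_quot_rep_qbasis:
  assumes W: "submod W" and U: "submod U" and sq: "simpq U W" and qb: "qbasis U W d e"
  shows "simple_quot_rep smul G (ann U W) d (rho W d e)"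
proof -
  have WU: "W \<subseteq> U" using sq unfolding simpq_def by simp
  have simple: "\<And>Z. submod Z \<Longrightarrow> W \<subseteq> Z \<Longrightarrow> Z \<subseteq> U \<Longrightarrow> Z = W \<or> Z = U"
    using sq unfolding simpq_def by blast
  have UW: "U \<noteq> W" using sq unfolding simpq_def by simp
  have dpos: "0 < d"
  proof (rule ccontr)
    assume "\<not> 0 < d"
    hence d0: "d = 0" by simp
    have "U \<subseteq> W"
    proof
      fix u assume "u \<in> U"
      then obtain c where "u - lsum d c e \<in> W" using qb unfolding qbasis_def by blast
      thus "u \<in> W" using d0 unfolding lsum_def by simp
    qed
    thus False using WU UW by auto
  qed
  have simp_r: "\<forall>V. V \<subseteq> vecs d \<and> (\<lambda>_. 0) \<in> V \<and> (\<forall>u\<in>V. \<forall>v\<in>V. (\<lambda>i. u i + v i) \<in> V)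
          \<and> (\<forall>c. \<forall>u\<in>V. (\<lambda>i. c * u i) \<in> V) \<and> (\<forall>g\<in>G. \<forall>u\<in>V. mapply d (rho W d e g) u \<in> V)
        \<longrightarrow> V = {\<lambda>_. 0} \<or> V = vecs d"
  proof (intro allI impI)
    fix V assume V: "V \<subseteq> vecs d \<and> (\<lambda>_. 0) \<in> V \<and> (\<forall>u\<in>V. \<forall>v\<in>V. (\<lambda>i. u i + v i) \<in> V)
          \<and> (\<forall>c. \<forall>u\<in>V. (\<lambda>i. c * u i) \<in> V) \<and> (\<forall>g\<in>G. \<forall>u\<in>V. mapply d (rho W d e g) u \<in> V)"
    define Z where "Z = {u\<in>U. crd W d e u \<in> V}"
    have Zs: "submod Z" unfolding submod_def Z_def
    proof (intro conjI ballI)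
      show "0 \<in> {u \<in> U. crd W d e u \<in> V}"
        using crd_W[OF W qb WU submod_0[OF W]] submod_0[OF U] V by simp
    next
      fix x y assume x: "x \<in> {u \<in> U. crd W d e u \<in> V}" and y: "y \<in> {u \<in> U. crd W d e u \<in> V}"
      thus "x + y \<in> {u \<in> U. crd W d e u \<in> V}"
        using crd_add[OF W U qb] submod_add[OF U] V by simp
    next
      fix x assume x: "x \<in> {u \<in> U. crd W d e u \<in> V}"
      have e1: "smul (-1) x = - x" by simp
      have "crd W d e (smul (-1) x) = (\<lambda>i. (-1) * crd W d e x i)" using crd_smul[OF W U qb] x by blast
      hence e2: "crd W d e (- x) = (\<lambda>i. (-1) * crd W d e x i)" unfolding e1 .
      have "(\<lambda>i. (-1) * crd W d e x i) \<in> V" using x V by blast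
      hence "crd W d e (- x) \<in> V" unfolding e2 .
      thus "- x \<in> {u \<in> U. crd W d e u \<in> V}" using submod_neg[OF U] x by simp
    next
      fix g x assume g: "g \<in> G" and x: "x \<in> {u \<in> U. crd W d e u \<in> V}"
      thus "g * x \<in> {u \<in> U. crd W d e u \<in> V}"
        using crd_mult[OF W U qb g] submod_mult[OF U g] V by simp
    qed
    have WZ: "W \<subseteq> Z" unfolding Z_def using crd_W[OF W qb WU] WU V by auto
    have ZU: "Z \<subseteq> U" unfolding Z_def by auto
    from simple[OF Zs WZ ZU] show "V = {\<lambda>_. 0} \<or> V = vecs d"
    proof
      assume ZW: "Z = W"
      have "V \<subseteq> {\<lambda>_. 0}"
      proof
        fix v assume v: "v \<in> V"
        have vv: "v \<in> vecs d" using v V by auto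
        have "lsum d v e \<in> Z" unfolding Z_def using lsum_in_U[OF U qb] crd_lsum[OF W U qb vv] v by simp
        hence "lsum d v e \<in> W" using ZW by simp
        hence "crd W d e (lsum d v e) = (\<lambda>_. 0)" using crd_W[OF W qb WU] by simp
        thus "v \<in> {\<lambda>_. 0}" using crd_lsum[OF W U qb vv] by simp
      qed
      thus ?thesis using V by blast
    next
      assume ZU': "Z = U"
      have "vecs d \<subseteq> V"
      proof
        fix v :: "nat \<Rightarrow> 'k" assume vv: "v \<in> vecs d"
        have "lsum d v e \<in> Z" using lsum_in_U[OF U qb] ZU' by simp
        thus "v \<in> V" unfolding Z_def using crd_lsum[OF W U qb vv] by simp
      qed
      thus ?thesis using V by blast
    qed
  qed
  have kill: "\<forall>x\<in>ann U W. \<forall>i<d. \<forall>j<d. rho W d e x i j = 0"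
  proof (intro ballI allI impI)
    fix x i j assume x: "x \<in> ann U W" and i: "i < d" and j: "j < d"
    have "x * e j \<in> W" using x qbasis_in[OF qb j] unfolding ann_def by blast
    thus "rho W d e x i j = 0" unfolding rho_def using crd_W[OF W qb WU] by simp
  qed
  show ?thesis unfolding simple_quot_rep_def simple_rep_def
    using rep_qbasis[OF W U qb] dpos simp_r kill by blast
qed

end

context hcb
begin

lemma lsum_split:
  "lsum (p + q) f (\<lambda>i. if i < p then t i else s (i - p)) = lsum p f t + lsum q (\<lambda>i. f (p + i)) s"
proof -
  have "lsum (p + q) f (\<lambda>i. if i < p then t i else s (i - p))
      = lsum (p + q) (\<lambda>i. if i < p then f i else (\<lambda>i. f (p + i)) (i - p)) (\<lambda>i. if i < p then t i else s (i - p))"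
    by (rule lsum_cong) auto
  also have "\<dots> = lsum p f t + lsum q (\<lambda>i. f (p + i)) s" by (rule lsum_concat)
  finally show ?thesis .
qed

lemma lsum_zero_coef: assumes "\<And>j. j < d \<Longrightarrow> c j = 0" shows "lsum d c e = 0"
proof -
  have "lsum d c e = lsum d (\<lambda>_. 0) e" by (rule lsum_cong) (simp_all add: assms)
  thus ?thesis by (simp add: lsum_zero)
qed

lemma qbasis_ext:
  assumes W: "submod W" and U1: "submod U1" and X1: "submod X1" and WU1: "W \<subseteq> U1" and U1X1: "U1 \<subseteq> X1"
    and qT: "qbasis U1 W p t" and qS: "qbasis X1 U1 q s"
  shows "qbasis X1 W (p + q) (\<lambda>i. if i < p then t i else s (i - p))"
  unfolding qbasis_def
proof (intro conjI allI impI ballI)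
  fix j assume "j < p + q"
  thus "(if j < p then t j else s (j - p)) \<in> X1" using qbasis_in[OF qT] qbasis_in[OF qS] U1X1 by auto
next
  fix u assume u: "u \<in> X1"
  obtain cS where cS: "u - lsum q cS s \<in> U1" using qS u unfolding qbasis_def by blast
  obtain cT where cT: "(u - lsum q cS s) - lsum p cT t \<in> W" using qT cS unfolding qbasis_def by blast
  define c where "c i = (if i < p then cT i else cS (i - p))" for i
  have "lsum (p + q) c (\<lambda>i. if i < p then t i else s (i - p)) = lsum p cT t + lsum q cS s"
    unfolding c_def by (rule lsum_concat)
  hence eq: "u - lsum (p + q) c (\<lambda>i. if i < p then t i else s (i - p)) = (u - lsum q cS s) - lsum p cT t"
    by (simp add: algebra_simps)
  have "u - lsum (p + q) c (\<lambda>i. if i < p then t i else s (i - p)) \<in> W" unfolding eq by (rule cT)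
  thus "\<exists>c. u - lsum (p + q) c (\<lambda>i. if i < p then t i else s (i - p)) \<in> W" by blast
next
  fix c j assume cW: "lsum (p + q) c (\<lambda>i. if i < p then t i else s (i - p)) \<in> W" and j: "j < p + q"
  have eq: "lsum (p + q) c (\<lambda>i. if i < p then t i else s (i - p)) = lsum p c t + lsum q (\<lambda>i. c (p + i)) s"
    by (rule lsum_split)
  have tU1: "lsum p c t \<in> U1" using lsum_in_U[OF U1 qT] .
  have "lsum q (\<lambda>i. c (p + i)) s = lsum (p + q) c (\<lambda>i. if i < p then t i else s (i - p)) - lsum p c t"
    unfolding eq by simp
  also have "\<dots> \<in> U1"
  proof (rule submod_diff[OF U1 _ tU1])
    show "lsum (p + q) c (\<lambda>i. if i < p then t i else s (i - p)) \<in> U1" using cW WU1 by (rule subsetD[rotated])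
  qed
  finally have sU1: "lsum q (\<lambda>i. c (p + i)) s \<in> U1" .
  have indS: "\<forall>c. lsum q c s \<in> U1 \<longrightarrow> (\<forall>j<q. c j = 0)" using qS unfolding qbasis_def by blast
  have b0: "\<forall>i<q. c (p + i) = 0" using indS[rule_format, OF sU1] by blast
  have z: "lsum q (\<lambda>i. c (p + i)) s = 0" by (rule lsum_zero_coef) (use b0 in simp)
  have tW: "lsum p c t \<in> W" using cW unfolding eq z by simp
  have indT: "\<forall>c. lsum p c t \<in> W \<longrightarrow> (\<forall>j<p. c j = 0)" using qT unfolding qbasis_def by blast
  have a0: "\<forall>i<p. c i = 0" using indT[rule_format, OF tW] by blast
  show "c j = 0"
  proof (cases "j < p")
    case True thus ?thesis using a0 by simp
  next
    case False
    hence jj: "j = p + (j - p)" "j - p < q" using j by auto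
    have "c (p + (j - p)) = 0" using b0 jj(2) by blast
    thus ?thesis using jj(1) by simp
  qed
qed

lemma sigma_expand:
  assumes s1: "\<forall>i<q. \<forall>j<q. \<sigma> (p + i) j = (if i = j then 1 else 0)"
  shows "lsum q c (\<lambda>j. lsum (p + q) (\<lambda>l. \<sigma> l j) (\<lambda>i. if i < p then t i else s (i - p)))
       = lsum p (\<lambda>i. \<Sum>j<q. \<sigma> i j * c j) t + lsum q c s"
proof -
  have "lsum q c (\<lambda>j. lsum (p + q) (\<lambda>l. \<sigma> l j) (\<lambda>i. if i < p then t i else s (i - p)))
      = lsum (p + q) (\<lambda>i. \<Sum>j<q. \<sigma> i j * c j) (\<lambda>i. if i < p then t i else s (i - p))"
    by (rule lsum_lsum)
  also have "\<dots> = lsum p (\<lambda>i. \<Sum>j<q. \<sigma> i j * c j) t + lsum q (\<lambda>i. \<Sum>j<q. \<sigma> (p + i) j * c j) s"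
    by (rule lsum_split)
  also have "lsum q (\<lambda>i. \<Sum>j<q. \<sigma> (p + i) j * c j) s = lsum q c s"
  proof (rule lsum_cong)
    fix i assume i: "i < q"
    have "(\<Sum>j<q. \<sigma> (p + i) j * c j) = (\<Sum>j<q. if i = j then c j else 0)"
      using s1 i by (intro sum.cong) auto
    also have "\<dots> = c i" using i by (simp add: sum.delta)
    finally show "(\<Sum>j<q. \<sigma> (p + i) j * c j) = c i" .
  qed simp
  finally show ?thesis .
qed

lemma split_ext:
  assumes W: "submod W" and U1: "submod U1" and X1: "submod X1"
    and sq1: "simpq U1 W" and sq2: "simpq X1 U1"
    and sp: "X1 \<subseteq> modspan F W" and fin: "finite F"
    and noext: "\<not> ext1_nz smul G (ann X1 U1) (ann U1 W)"
  shows "\<exists>Y. submod Y \<and> W \<subseteq> Y \<and> Y \<subseteq> X1 \<and> Y \<inter> U1 \<subseteq> W \<and> (\<forall>x\<in>X1. \<exists>y\<in>Y. x - y \<in> U1)"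
proof -
  have WU1: "W \<subseteq> U1" using sq1 unfolding simpq_def by simp
  have U1X1: "U1 \<subseteq> X1" using sq2 unfolding simpq_def by simp
  have spU1: "U1 \<subseteq> modspan F W" using U1X1 sp by blast
  obtain FT where FT: "finite FT" "FT \<subseteq> U1" "U1 \<subseteq> modspan FT W"
    using fdq_inside[OF submod_subspace[OF U1] WU1 spU1 fin] by blast
  obtain p t where qT: "qbasis U1 W p t" using qbasis_exists[OF submod_subspace[OF W] FT] by blast
  have spX: "X1 \<subseteq> modspan F U1" using sp modspan_mono[OF WU1] by blast
  obtain FS where FS: "finite FS" "FS \<subseteq> X1" "X1 \<subseteq> modspan FS U1"
    using fdq_inside[OF submod_subspace[OF X1] U1X1 spX fin] by blast
  obtain q s where qS: "qbasis X1 U1 q s" using qbasis_exists[OF submod_subspace[OF U1] FS] by blast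
  define ee where "ee i = (if i < p then t i else s (i - p))" for i
  have qE: "qbasis X1 W (p + q) ee" unfolding ee_def by (rule qbasis_ext[OF W U1 X1 WU1 U1X1 qT qS])
  define \<rho>T where "\<rho>T = rho W p t"
  define \<rho>S where "\<rho>S = rho U1 q s"
  define \<rho>E where "\<rho>E = rho W (p + q) ee"
  have sT: "simple_quot_rep smul G (ann U1 W) p \<rho>T" unfolding \<rho>T_def
    by (rule simple_quot_rep_qbasis[OF W U1 sq1 qT])
  have sS: "simple_quot_rep smul G (ann X1 U1) q \<rho>S" unfolding \<rho>S_def
    by (rule simple_quot_rep_qbasis[OF U1 X1 sq2 qS])
  have repE: "rep smul G (p + q) \<rho>E" unfolding \<rho>E_def by (rule rep_qbasis[OF W X1 qE])
  have eeT: "ee j = t j" if "j < p" for j using that unfolding ee_def by simp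
  have eeS: "ee (p + j) = s j" for j unfolding ee_def by simp
  have blocks: "\<forall>g\<in>G. (\<forall>i<p. \<forall>j<p. \<rho>E g i j = \<rho>T g i j) \<and>
               (\<forall>i<q. \<forall>j<p. \<rho>E g (p + i) j = 0) \<and>
               (\<forall>i<q. \<forall>j<q. \<rho>E g (p + i) (p + j) = \<rho>S g i j)"
  proof (intro ballI conjI allI impI)
    fix g assume g: "g \<in> G"
    {
      fix j assume j: "j < p"
      define c where "c i = (if i < p then \<rho>T g i j else (\<lambda>_. 0) (i - p))" for i
      have "lsum (p + q) c ee = lsum p (\<lambda>i. \<rho>T g i j) t + lsum q (\<lambda>_. 0) s"
        unfolding c_def ee_def by (rule lsum_concat)
      hence lc: "lsum (p + q) c ee = lsum p (\<lambda>i. \<rho>T g i j) t" by (simp add: lsum_zero)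
      have "g * ee j - lsum (p + q) c ee \<in> W"
        unfolding lc eeT[OF j] \<rho>T_def by (rule rho_spec[OF qT U1 g j])
      hence "\<And>i. i < p + q \<Longrightarrow> \<rho>E g i j = c i"
        unfolding \<rho>E_def using rho_unique[OF W qE X1 g] j by simp
      hence "(\<forall>i<p. \<rho>E g i j = \<rho>T g i j) \<and> (\<forall>i<q. \<rho>E g (p + i) j = 0)"
        unfolding c_def by auto
    } note A = this
    show "\<And>i j. i < p \<Longrightarrow> j < p \<Longrightarrow> \<rho>E g i j = \<rho>T g i j" using A by blast
    show "\<And>i j. i < q \<Longrightarrow> j < p \<Longrightarrow> \<rho>E g (p + i) j = 0" using A by blast
    fix i j assume i: "i < q" and j: "j < q"
    have sj: "g * s j - lsum q (\<lambda>l. \<rho>S g l j) s \<in> U1" unfolding \<rho>S_def by (rule rho_spec[OF qS X1 g j])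
    then obtain c' where c': "(g * s j - lsum q (\<lambda>l. \<rho>S g l j) s) - lsum p c' t \<in> W"
      using qT unfolding qbasis_def by blast
    define c where "c l = (if l < p then c' l else (\<lambda>l. \<rho>S g l j) (l - p))" for l
    have "lsum (p + q) c ee = lsum p c' t + lsum q (\<lambda>l. \<rho>S g l j) s"
      unfolding c_def ee_def by (rule lsum_concat)
    hence "g * ee (p + j) - lsum (p + q) c ee = (g * s j - lsum q (\<lambda>l. \<rho>S g l j) s) - lsum p c' t"
      unfolding eeS by (simp add: algebra_simps)
    hence "g * ee (p + j) - lsum (p + q) c ee \<in> W" using c' by simp
    hence "\<rho>E g (p + i) (p + j) = c (p + i)"
      unfolding \<rho>E_def using rho_unique[OF W qE X1 g] i j by simp
    thus "\<rho>E g (p + i) (p + j) = \<rho>S g i j" unfolding c_def by simp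
  qed
  have "\<not> ext_nonsplit smul G p \<rho>T q \<rho>S"
    using noext sS sT unfolding ext1_nz_def by blast
  hence "\<forall>\<rho>E. rep smul G (p + q) \<rho>E \<and>
       (\<forall>g\<in>G. (\<forall>i<p. \<forall>j<p. \<rho>E g i j = \<rho>T g i j) \<and>
               (\<forall>i<q. \<forall>j<p. \<rho>E g (p + i) j = 0) \<and>
               (\<forall>i<q. \<forall>j<q. \<rho>E g (p + i) (p + j) = \<rho>S g i j)) \<longrightarrow>
       (\<exists>\<sigma>. (\<forall>i<q. \<forall>j<q. \<sigma> (p + i) j = (if i = j then 1 else 0)) \<and>
              (\<forall>g\<in>G. \<forall>i<p + q. \<forall>j<q.
                  (\<Sum>l<p + q. \<rho>E g i l * \<sigma> l j) = (\<Sum>l<q. \<sigma> i l * \<rho>S g l j)))"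
    unfolding ext_nonsplit_def by blast
  from this[rule_format, OF conjI[OF repE blocks]]
  obtain \<sigma> where s1: "\<forall>i<q. \<forall>j<q. \<sigma> (p + i) j = (if i = j then 1 else 0)"
    and s2: "\<forall>g\<in>G. \<forall>i<p + q. \<forall>j<q. (\<Sum>l<p + q. \<rho>E g i l * \<sigma> l j) = (\<Sum>l<q. \<sigma> i l * \<rho>S g l j)"
    by blast
  define s' where "s' j = lsum (p + q) (\<lambda>l. \<sigma> l j) ee" for j
  have expand: "lsum q c s' = lsum p (\<lambda>i. \<Sum>j<q. \<sigma> i j * c j) t + lsum q c s" for c
    unfolding s'_def ee_def by (rule sigma_expand[OF s1])
  have s'X: "s' j \<in> X1" for j unfolding s'_def by (rule lsum_in_U[OF X1 qE])
  have key: "g * s' j - lsum q (\<lambda>l. \<rho>S g l j) s' \<in> W" if g: "g \<in> G" and j: "j < q" for g j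
  proof -
    have se: "\<And>l. l < p + q \<Longrightarrow> g * ee l - lsum (p + q) (\<lambda>i. \<rho>E g i l) ee \<in> W"
      unfolding \<rho>E_def using rho_spec[OF qE X1 g] by blast
    have m1: "g * s' j = lsum (p + q) (\<lambda>l. \<sigma> l j) (\<lambda>l. g * ee l)"
      unfolding s'_def by (rule lsum_mult)
    have m2: "lsum (p + q) (\<lambda>l. \<sigma> l j) (\<lambda>l. lsum (p + q) (\<lambda>i. \<rho>E g i l) ee)
        = lsum (p + q) (\<lambda>i. \<Sum>l<p + q. \<rho>E g i l * \<sigma> l j) ee"
      by (rule lsum_lsum)
    have m3: "lsum (p + q) (\<lambda>i. \<Sum>l<p + q. \<rho>E g i l * \<sigma> l j) ee
        = lsum (p + q) (\<lambda>i. \<Sum>l<q. \<sigma> i l * \<rho>S g l j) ee"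
      by (rule lsum_cong) (use s2 g j in auto)
    have m4: "lsum (p + q) (\<lambda>i. \<Sum>l<q. \<sigma> i l * \<rho>S g l j) ee = lsum q (\<lambda>l. \<rho>S g l j) s'"
      unfolding s'_def by (rule lsum_lsum[symmetric])
    have "g * s' j - lsum q (\<lambda>l. \<rho>S g l j) s'
        = lsum (p + q) (\<lambda>l. \<sigma> l j) (\<lambda>l. g * ee l - lsum (p + q) (\<lambda>i. \<rho>E g i l) ee)"
      unfolding lsum_diff_fun m1 m2 m3 m4 by simp
    also have "\<dots> \<in> W" by (rule lsum_in[OF W]) (rule se)
    finally show ?thesis .
  qed
  define Y where "Y = {y. \<exists>c. y - lsum q c s' \<in> W}"
  have Ymem: "y \<in> Y \<longleftrightarrow> (\<exists>c. y - lsum q c s' \<in> W)" for y unfolding Y_def by simp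
  have Ys: "submod Y" unfolding submod_def
  proof (intro conjI ballI)
    have "0 - lsum q (\<lambda>_. 0) s' \<in> W" using submod_0[OF W] by (simp add: lsum_zero)
    thus "0 \<in> Y" unfolding Ymem by (rule exI[of _ "\<lambda>_. 0"])
  next
    fix x y assume "x \<in> Y" "y \<in> Y"
    then obtain a b where a: "x - lsum q a s' \<in> W" and b: "y - lsum q b s' \<in> W" unfolding Ymem by blast
    have eq: "x + y - lsum q (\<lambda>j. a j + b j) s' = (x - lsum q a s') + (y - lsum q b s')"
      unfolding lsum_add_coef by (simp add: algebra_simps)
    have "x + y - lsum q (\<lambda>j. a j + b j) s' \<in> W" unfolding eq by (rule submod_add[OF W a b])
    thus "x + y \<in> Y" unfolding Ymem by (rule exI[of _ "\<lambda>j. a j + b j"])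
  next
    fix x assume "x \<in> Y"
    then obtain a where a: "x - lsum q a s' \<in> W" unfolding Ymem by blast
    have eq: "- x - lsum q (\<lambda>j. (-1) * a j) s' = - (x - lsum q a s')"
      unfolding lsum_smul[symmetric] by simp
    have "- x - lsum q (\<lambda>j. (-1) * a j) s' \<in> W" unfolding eq by (rule submod_neg[OF W a])
    thus "- x \<in> Y" unfolding Ymem by (rule exI[of _ "\<lambda>j. (-1) * a j"])
  next
    fix g x assume g: "g \<in> G" and "x \<in> Y"
    then obtain a where a: "x - lsum q a s' \<in> W" unfolding Ymem by blast
    define b where "b l = (\<Sum>j<q. \<rho>S g l j * a j)" for l
    have lb: "lsum q b s' = lsum q a (\<lambda>j. lsum q (\<lambda>l. \<rho>S g l j) s')"
      unfolding b_def by (rule lsum_lsum[symmetric])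
    have eq: "g * x - lsum q b s' = g * (x - lsum q a s') + lsum q a (\<lambda>j. g * s' j - lsum q (\<lambda>l. \<rho>S g l j) s')"
      unfolding lb lsum_diff_fun lsum_mult[symmetric] by (simp add: algebra_simps)
    have t1: "g * (x - lsum q a s') \<in> W" by (rule submod_mult[OF W g a])
    have t2: "lsum q a (\<lambda>j. g * s' j - lsum q (\<lambda>l. \<rho>S g l j) s') \<in> W"
      by (rule lsum_in[OF W]) (rule key[OF g])
    have "g * x - lsum q b s' \<in> W" unfolding eq by (rule submod_add[OF W t1 t2])
    thus "g * x \<in> Y" unfolding Ymem by (rule exI[of _ b])
  qed
  have WY: "W \<subseteq> Y"
  proof
    fix w assume w: "w \<in> W"
    have "w - lsum q (\<lambda>_. 0) s' \<in> W" using w by (simp add: lsum_zero)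
    thus "w \<in> Y" unfolding Ymem by (rule exI[of _ "\<lambda>_. 0"])
  qed
  have YX: "Y \<subseteq> X1"
  proof
    fix y assume "y \<in> Y"
    then obtain a where a: "y - lsum q a s' \<in> W" unfolding Ymem by blast
    have l: "lsum q a s' \<in> X1" by (rule lsum_in[OF X1]) (rule s'X)
    have "(y - lsum q a s') + lsum q a s' \<in> X1" using submod_add[OF X1 _ l] a WU1 U1X1 by blast
    thus "y \<in> X1" by simp
  qed
  have YU: "Y \<inter> U1 \<subseteq> W"
  proof
    fix y assume y: "y \<in> Y \<inter> U1"
    hence "y \<in> Y" by simp
    then obtain a where a: "y - lsum q a s' \<in> W" unfolding Ymem by blast
    have tU: "lsum p (\<lambda>i. \<Sum>j<q. \<sigma> i j * a j) t \<in> U1" by (rule lsum_in_U[OF U1 qT])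
    have eq: "lsum q a s = y - (y - lsum q a s') - lsum p (\<lambda>i. \<Sum>j<q. \<sigma> i j * a j) t"
      unfolding expand by simp
    have yU: "y \<in> U1" using y by simp
    have aU: "y - lsum q a s' \<in> U1" using a WU1 by blast
    have "lsum q a s \<in> U1" unfolding eq by (intro submod_diff[OF U1] yU aU tU)
    hence "\<forall>j<q. a j = 0" using qS unfolding qbasis_def by blast
    hence "lsum q a s' = 0" by (intro lsum_zero_coef) simp
    thus "y \<in> W" using a by simp
  qed
  have gen: "\<forall>x\<in>X1. \<exists>y\<in>Y. x - y \<in> U1"
  proof
    fix x assume x: "x \<in> X1"
    obtain a where a: "x - lsum q a s \<in> U1" using qS x unfolding qbasis_def by blast
    have yY: "lsum q a s' \<in> Y" unfolding Ymem using submod_0[OF W] by (intro exI[of _ a]) simp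
    have tU: "lsum p (\<lambda>i. \<Sum>j<q. \<sigma> i j * a j) t \<in> U1" by (rule lsum_in_U[OF U1 qT])
    have eq: "x - lsum q a s' = (x - lsum q a s) - lsum p (\<lambda>i. \<Sum>j<q. \<sigma> i j * a j) t"
      unfolding expand by (simp add: algebra_simps)
    have "x - lsum q a s' \<in> U1" unfolding eq by (rule submod_diff[OF U1 a tU])
    thus "\<exists>y\<in>Y. x - y \<in> U1" using yY by blast
  qed
  show ?thesis using Ys WY YX YU gen by blast
qed

end

context hcb
begin

lemma dim_int_strict:
  assumes Wa: "submod Wa" and Wb: "submod Wb" and ab: "Wa \<subseteq> Wb" and ne: "Wa \<noteq> Wb"
    and W: "W \<subseteq> Wa" and sp: "Wb \<subseteq> modspan F0 W" and fin: "finite F0"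
  shows "vs.dim (vs.span F0 \<inter> Wa) < vs.dim (vs.span F0 \<inter> Wb)"
proof -
  have s1: "vs.subspace (vs.span F0 \<inter> Wa)" by (rule vs.subspace_inter[OF vs.subspace_span submod_subspace[OF Wa]])
  have s2: "vs.subspace (vs.span F0 \<inter> Wb)" by (rule vs.subspace_inter[OF vs.subspace_span submod_subspace[OF Wb]])
  have sub: "vs.span F0 \<inter> Wa \<subseteq> vs.span F0 \<inter> Wb" using ab by blast
  have neq: "vs.span F0 \<inter> Wa \<noteq> vs.span F0 \<inter> Wb"
  proof
    assume eq: "vs.span F0 \<inter> Wa = vs.span F0 \<inter> Wb"
    have "Wb \<subseteq> Wa"
    proof
      fix x assume x: "x \<in> Wb"
      then obtain y where y: "y \<in> vs.span F0" "x - y \<in> W" using sp unfolding modspan_def by blast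
      have xyb: "x - y \<in> Wb" using y(2) W ab by blast
      have "x - (x - y) \<in> Wb" by (rule submod_diff[OF Wb x xyb])
      hence "y \<in> Wb" by simp
      hence "y \<in> Wa" using eq y(1) by blast
      moreover have "x - y \<in> Wa" using y(2) W by blast
      ultimately have "(x - y) + y \<in> Wa" using submod_add[OF Wa] by blast
      thus "x \<in> Wa" by simp
    qed
    thus False using ab ne by blast
  qed
  have sp2: "vs.span F0 \<inter> Wb \<subseteq> vs.span F0" by blast
  show ?thesis by (rule dim_strict[OF s1 s2 sub sp2 fin neq])
qed

lemma dim_int_mono:
  assumes Wa: "submod Wa" and Wb: "submod Wb" and ab: "Wa \<subseteq> Wb" and fin: "finite F0"
  shows "vs.dim (vs.span F0 \<inter> Wa) \<le> vs.dim (vs.span F0 \<inter> Wb)"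
proof -
  have s1: "vs.subspace (vs.span F0 \<inter> Wa)" by (rule vs.subspace_inter[OF vs.subspace_span submod_subspace[OF Wa]])
  have s2: "vs.subspace (vs.span F0 \<inter> Wb)" by (rule vs.subspace_inter[OF vs.subspace_span submod_subspace[OF Wb]])
  have sub: "vs.span F0 \<inter> Wa \<subseteq> vs.span F0 \<inter> Wb" using ab by blast
  have sp2: "vs.span F0 \<inter> Wb \<subseteq> vs.span F0" by blast
  show ?thesis by (rule dim_mono_fin[OF s1 s2 sub sp2 fin])
qed

lemma simple_sub_exists:
  assumes W: "submod W" and U: "submod U" and WU: "W \<subseteq> U" and ne: "\<not> U \<subseteq> W"
    and sp: "U \<subseteq> modspan F0 W" and fin: "finite F0"
  shows "\<exists>U1. submod U1 \<and> W \<subseteq> U1 \<and> U1 \<subseteq> U \<and> simpq U1 W"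
proof -
  define P where "P Z \<longleftrightarrow> submod Z \<and> W \<subseteq> Z \<and> Z \<subseteq> U \<and> Z \<noteq> W" for Z
  define m where "m Z = vs.dim (vs.span F0 \<inter> Z)" for Z
  have PU: "P U" unfolding P_def using U WU ne by blast
  define n0 where "n0 = (LEAST k. \<exists>Z. P Z \<and> m Z = k)"
  have "\<exists>Z. P Z \<and> m Z = n0" unfolding n0_def by (rule LeastI[of _ "m U"]) (use PU in blast)
  then obtain U1 where U1: "P U1" "m U1 = n0" by blast
  have minimal: "m U1 \<le> m Z" if "P Z" for Z
  proof -
    have "n0 \<le> m Z" unfolding n0_def by (rule Least_le) (use that in blast)
    thus ?thesis using U1(2) by simp
  qed
  have U1s: "submod U1" "W \<subseteq> U1" "U1 \<subseteq> U" "U1 \<noteq> W" using U1(1) unfolding P_def by auto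
  have "simpq U1 W" unfolding simpq_def
  proof (intro conjI allI impI)
    show "W \<subseteq> U1" "U1 \<noteq> W" by (fact U1s(2), fact U1s(4))
    fix Z assume Z: "submod Z \<and> W \<subseteq> Z \<and> Z \<subseteq> U1"
    show "Z = W \<or> Z = U1"
    proof (rule ccontr)
      assume c: "\<not> (Z = W \<or> Z = U1)"
      have PZ: "P Z" unfolding P_def using Z U1s c by blast
      have spU1: "U1 \<subseteq> modspan F0 W" using U1s(3) sp by blast
      have "vs.dim (vs.span F0 \<inter> Z) < vs.dim (vs.span F0 \<inter> U1)"
        using dim_int_strict[OF conjunct1[OF Z] U1s(1) _ _ _ spU1 fin] Z c by blast
      thus False using minimal[OF PZ] unfolding m_def by simp
    qed
  qed
  thus ?thesis using U1s by blast
qed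

lemma ideal_prod_sum_closed:
  assumes "\<And>i. i \<in> S \<Longrightarrow> f i \<in> ideal_prod I J" and "finite S"
  shows "sum f S \<in> ideal_prod I J"
  using assms(2,1)
proof (induction S rule: finite_induct)
  case empty
  show ?case unfolding ideal_prod_mem by (intro exI[of _ 0]) simp
next
  case (insert a S)
  have fa: "f a \<in> ideal_prod I J" using insert by simp
  have fS: "sum f S \<in> ideal_prod I J" using insert by simp
  obtain x1 y1 and n1 :: nat where u: "f a = (\<Sum>i<n1. x1 i * y1 i)" "\<forall>i<n1. x1 i \<in> I \<and> y1 i \<in> J"
    using fa unfolding ideal_prod_mem by blast
  obtain x2 y2 and n2 :: nat where v: "sum f S = (\<Sum>i<n2. x2 i * y2 i)" "\<forall>i<n2. x2 i \<in> I \<and> y2 i \<in> J"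
    using fS unfolding ideal_prod_mem by blast
  define x where "x i = (if i < n1 then x1 i else x2 (i - n1))" for i
  define y where "y i = (if i < n1 then y1 i else y2 (i - n1))" for i
  have "sum f (insert a S) = (\<Sum>i<n1+n2. x i * y i)"
    using insert(1,2) unfolding u(1)[symmetric] v(1)[symmetric] x_def y_def
    by (simp add: sum_concat_mult u(1) v(1))
  moreover have "\<forall>i<n1+n2. x i \<in> I \<and> y i \<in> J" using u(2) v(2) unfolding x_def y_def by auto
  ultimately show ?case unfolding ideal_prod_mem by blast
qed

lemma ideal_prod_assoc_sub:
  assumes A: "ideal2 G A" and B: "ideal2 G B" and C: "ideal2 G C"
  shows "ideal_prod (ideal_prod A B) C \<subseteq> ideal_prod A (ideal_prod B C)"
proof
  fix z assume "z \<in> ideal_prod (ideal_prod A B) C"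
  then obtain x c and n :: nat where z: "z = (\<Sum>i<n. x i * c i)" "\<forall>i<n. x i \<in> ideal_prod A B \<and> c i \<in> C"
    unfolding ideal_prod_mem by blast
  have "x i * c i \<in> ideal_prod A (ideal_prod B C)" if i: "i < n" for i
  proof -
    obtain a b and k :: nat where xi: "x i = (\<Sum>l<k. a l * b l)" "\<forall>l<k. a l \<in> A \<and> b l \<in> B"
      using z(2) i unfolding ideal_prod_mem by blast
    have "x i * c i = (\<Sum>l<k. a l * (b l * c i))" unfolding xi(1) by (simp add: sum_distrib_right mult.assoc)
    also have "\<dots> \<in> ideal_prod A (ideal_prod B C)"
    proof (rule ideal_prod_sum_closed)
      fix l assume "l \<in> {..<k}"
      hence l: "l < k" by simp
      have "a l \<in> A" using xi(2) l by blast
      moreover have "b l * c i \<in> ideal_prod B C"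
        by (rule ideal_prod_single) (use xi(2) z(2) i l in blast)+
      ultimately show "a l * (b l * c i) \<in> ideal_prod A (ideal_prod B C)" by (rule ideal_prod_single)
    qed simp
    finally show ?thesis .
  qed
  thus "z \<in> ideal_prod A (ideal_prod B C)" unfolding z(1) by (intro ideal_prod_sum_closed) auto
qed

lemma ideal_prod_mono1: "A \<subseteq> A' \<Longrightarrow> ideal_prod A B \<subseteq> ideal_prod A' B"
  unfolding ideal_prod_def by blast

lemma Wset_leftmult:
  assumes I: "I \<in> Wset G B" and Bc: "B \<subseteq> cfs smul G" and M: "M \<in> B"
  shows "\<exists>J\<in>Wset G B. J \<subseteq> ideal_prod M I"
  using I
proof (induction rule: Wset.induct)
  case Wnil
  have Mi: "ideal2 G M" using cfs_ideal Bc M by blast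
  have "ideal_prod G M \<in> Wset G B" by (rule Wset.Wcons[OF Wset.Wnil M])
  moreover have "ideal_prod G M \<subseteq> ideal_prod M G"
  proof
    fix z assume "z \<in> ideal_prod G M"
    hence "z \<in> M" using ideal_prod_subR[OF G_ideal Mi] by blast
    hence "z * 1 \<in> ideal_prod M G" using G1 by (intro ideal_prod_single)
    thus "z \<in> ideal_prod M G" by simp
  qed
  ultimately show ?case by blast
next
  case (Wcons I n)
  obtain J where J: "J \<in> Wset G B" "J \<subseteq> ideal_prod M I" using Wcons.IH by blast
  have Mi: "ideal2 G M" using cfs_ideal Bc M by blast
  have Ii: "ideal2 G I" using Wset_ideal[OF Wcons(1) Bc] .
  have ni: "ideal2 G n" using cfs_ideal Bc Wcons(2) by blast
  have "ideal_prod J n \<in> Wset G B" by (rule Wset.Wcons[OF J(1) Wcons(2)])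
  moreover have "ideal_prod J n \<subseteq> ideal_prod M (ideal_prod I n)"
    using ideal_prod_mono1[OF J(2)] ideal_prod_assoc_sub[OF Mi Ii ni] by blast
  ultimately show ?case by blast
qed

end

context hcb
begin

lemma simpq_transfer:
  assumes W: "submod W" and U1: "submod U1" and X1: "submod X1" and Y1: "submod Y1"
    and sq: "simpq U1 W" and U1X1: "U1 \<subseteq> X1" and WY: "W \<subseteq> Y1" and YX: "Y1 \<subseteq> X1"
    and YU: "Y1 \<inter> U1 \<subseteq> W" and gen: "\<forall>x\<in>X1. \<exists>y\<in>Y1. x - y \<in> U1"
  shows "simpq X1 Y1" and "ann X1 Y1 = ann U1 W"
proof -
  have WU1: "W \<subseteq> U1" using sq unfolding simpq_def by simp
  have U1W: "U1 \<noteq> W" using sq unfolding simpq_def by simp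
  have simple: "\<And>Z. submod Z \<Longrightarrow> W \<subseteq> Z \<Longrightarrow> Z \<subseteq> U1 \<Longrightarrow> Z = W \<or> Z = U1"
    using sq unfolding simpq_def by blast
  show "simpq X1 Y1" unfolding simpq_def
  proof (intro conjI allI impI)
    show "Y1 \<subseteq> X1" by fact
    show "X1 \<noteq> Y1"
    proof
      assume "X1 = Y1"
      hence "U1 \<subseteq> Y1 \<inter> U1" using U1X1 by blast
      hence "U1 \<subseteq> W" using YU by blast
      thus False using WU1 U1W by blast
    qed
    fix Z assume Z: "submod Z \<and> Y1 \<subseteq> Z \<and> Z \<subseteq> X1"
    have Zs: "submod Z" using Z by blast
    have ZU: "submod (Z \<inter> U1)" using Zs U1 unfolding submod_def by blast
    have "W \<subseteq> Z \<inter> U1" using WY Z WU1 by blast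
    from simple[OF ZU this Int_lower2] show "Z = Y1 \<or> Z = X1"
    proof
      assume e: "Z \<inter> U1 = W"
      have "Z \<subseteq> Y1"
      proof
        fix z assume z: "z \<in> Z"
        hence "z \<in> X1" using Z by blast
        then obtain y where y: "y \<in> Y1" "z - y \<in> U1" using gen by blast
        have "y \<in> Z" using y(1) Z by blast
        hence "z - y \<in> Z" using submod_diff[OF Zs z] by blast
        hence "z - y \<in> W" using e y(2) by blast
        hence "z - y \<in> Y1" using WY by blast
        hence "(z - y) + y \<in> Y1" using submod_add[OF Y1 _ y(1)] by blast
        thus "z \<in> Y1" by simp
      qed
      thus ?thesis using Z by blast
    next
      assume e: "Z \<inter> U1 = U1"
      have "X1 \<subseteq> Z"
      proof
        fix x assume x: "x \<in> X1"
        then obtain y where y: "y \<in> Y1" "x - y \<in> U1" using gen by blast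
        have a: "x - y \<in> Z" using e y(2) by blast
        have b: "y \<in> Z" using y(1) Z by blast
        have "(x - y) + y \<in> Z" by (rule submod_add[OF Zs a b])
        thus "x \<in> Z" by simp
      qed
      thus ?thesis using Z by blast
    qed
  qed
  show "ann X1 Y1 = ann U1 W"
  proof
    show "ann X1 Y1 \<subseteq> ann U1 W"
    proof
      fix g assume g: "g \<in> ann X1 Y1"
      have gG: "g \<in> G" using g unfolding ann_def by blast
      have "\<forall>u\<in>U1. g * u \<in> W"
      proof
        fix u assume u: "u \<in> U1"
        have "g * u \<in> Y1" using g u U1X1 unfolding ann_def by blast
        moreover have "g * u \<in> U1" using submod_mult[OF U1 gG u] .
        ultimately show "g * u \<in> W" using YU by blast
      qed
      thus "g \<in> ann U1 W" unfolding ann_def using gG by blast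
    qed
  next
    show "ann U1 W \<subseteq> ann X1 Y1"
    proof
      fix g assume g: "g \<in> ann U1 W"
      have gG: "g \<in> G" using g unfolding ann_def by blast
      have "\<forall>x\<in>X1. g * x \<in> Y1"
      proof
        fix x assume x: "x \<in> X1"
        then obtain y where y: "y \<in> Y1" "x - y \<in> U1" using gen by blast
        have a: "g * (x - y) \<in> Y1" using g y(2) WY unfolding ann_def by blast
        have b: "g * y \<in> Y1" using submod_mult[OF Y1 gG y(1)] .
        have "g * (x - y) + g * y \<in> Y1" by (rule submod_add[OF Y1 a b])
        thus "g * x \<in> Y1" by (simp add: algebra_simps)
      qed
      thus "g \<in> ann X1 Y1" unfolding ann_def using gG by blast
    qed
  qed
qed

lemma ext_split_induct:
  assumes fin: "finite F0" and B: "B \<in> Cls" and n: "n \<in> Wset G B"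
  shows "\<And>W U1 X. submod W \<Longrightarrow> submod U1 \<Longrightarrow> submod X \<Longrightarrow> simpq U1 W \<Longrightarrow>
     (\<forall>M'\<in>B. \<not> ext1_nz smul G M' (ann U1 W)) \<Longrightarrow> U1 \<subseteq> X \<Longrightarrow> (\<forall>x\<in>n. \<forall>y\<in>X. x * y \<in> U1) \<Longrightarrow>
     X \<subseteq> modspan F0 W \<Longrightarrow> vs.dim (vs.span F0 \<inter> X) - vs.dim (vs.span F0 \<inter> U1) = k \<Longrightarrow>
     \<exists>Y. submod Y \<and> W \<subseteq> Y \<and> Y \<subseteq> X \<and> Y \<inter> U1 \<subseteq> W \<and> (\<forall>x\<in>X. \<exists>y\<in>Y. x - y \<in> U1)"
proof (induction k rule: less_induct)
  case (less k W U1 X)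
  note W = less(2) and U1 = less(3) and X = less(4) and sq = less(5) and noB = less(6)
    and U1X = less(7) and kill = less(8) and sp = less(9) and kdef = less(10)
  have WU1: "W \<subseteq> U1" using sq unfolding simpq_def by simp
  show ?case
  proof (cases "X \<subseteq> U1")
    case True
    show ?thesis
    proof (intro exI[of _ W] conjI)
      show "submod W" "W \<subseteq> W" by (fact W) simp
      show "W \<subseteq> X" using WU1 U1X by blast
      show "W \<inter> U1 \<subseteq> W" by blast
      show "\<forall>x\<in>X. \<exists>y\<in>W. x - y \<in> U1"
      proof
        fix x assume "x \<in> X"
        hence "x - 0 \<in> U1" using True by auto
        thus "\<exists>y\<in>W. x - y \<in> U1" using submod_0[OF W] by blast
      qed
    qed
  next
    case False
    have spU: "X \<subseteq> modspan F0 U1" using sp modspan_mono[OF WU1] by blast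
    obtain X1 where X1: "submod X1" "U1 \<subseteq> X1" "X1 \<subseteq> X" "simpq X1 U1"
      using simple_sub_exists[OF U1 X U1X False spU fin] by blast
    have spX1: "X1 \<subseteq> modspan F0 U1" using X1(3) spU by blast
    have M'c: "ann X1 U1 \<in> cfs smul G" using ann_cfs[OF U1 X1(1) X1(4) spX1 fin] .
    have ni: "ideal2 G n" using Wset_ideal[OF n Cls_sub[OF B]] .
    have "n \<subseteq> ann X1 U1"
    proof
      fix x assume x: "x \<in> n"
      have "x \<in> G" using ideal2_sub[OF ni x] .
      moreover have "\<forall>y\<in>X1. x * y \<in> U1" using kill x X1(3) by blast
      ultimately show "x \<in> ann X1 U1" unfolding ann_def by blast
    qed
    hence M'B: "ann X1 U1 \<in> B" using Wset_in_max[OF n Cls_sub[OF B] M'c] by blast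
    have ne: "\<not> ext1_nz smul G (ann X1 U1) (ann U1 W)" using noB M'B by blast
    have spX1W: "X1 \<subseteq> modspan F0 W" using X1(3) sp by blast
    obtain Y1 where Y1: "submod Y1" "W \<subseteq> Y1" "Y1 \<subseteq> X1" "Y1 \<inter> U1 \<subseteq> W" "\<forall>x\<in>X1. \<exists>y\<in>Y1. x - y \<in> U1"
      using split_ext[OF W U1 X1(1) sq X1(4) spX1W fin ne] by blast
    have sq': "simpq X1 Y1" and ann': "ann X1 Y1 = ann U1 W"
      using simpq_transfer[OF W U1 X1(1) Y1(1) sq X1(2) Y1(2) Y1(3) Y1(4) Y1(5)] by blast+
    have noB': "\<forall>M'\<in>B. \<not> ext1_nz smul G M' (ann X1 Y1)" using noB ann' by simp
    have kill': "\<forall>x\<in>n. \<forall>y\<in>X. x * y \<in> X1" using kill X1(2) by blast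
    have sp': "X \<subseteq> modspan F0 Y1" using sp modspan_mono[OF Y1(2)] by blast
    have U1X1ne: "U1 \<noteq> X1" using X1(4) unfolding simpq_def by blast
    have d1: "vs.dim (vs.span F0 \<inter> U1) < vs.dim (vs.span F0 \<inter> X1)"
      using dim_int_strict[OF U1 X1(1) X1(2) U1X1ne WU1 spX1W fin] .
    have d2: "vs.dim (vs.span F0 \<inter> X1) \<le> vs.dim (vs.span F0 \<inter> X)"
      using dim_int_mono[OF X1(1) X X1(3) fin] .
    have lt: "vs.dim (vs.span F0 \<inter> X) - vs.dim (vs.span F0 \<inter> X1) < k" using d1 d2 kdef by linarith
    obtain Y2 where Y2: "submod Y2" "Y1 \<subseteq> Y2" "Y2 \<subseteq> X" "Y2 \<inter> X1 \<subseteq> Y1" "\<forall>x\<in>X. \<exists>y\<in>Y2. x - y \<in> X1"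
      using less.IH[OF lt Y1(1) X1(1) X sq' noB' X1(3) kill' sp' refl] by blast
    show ?thesis
    proof (intro exI[of _ Y2] conjI)
      show "submod Y2" "Y2 \<subseteq> X" by (fact Y2(1), fact Y2(3))
      show "W \<subseteq> Y2" using Y1(2) Y2(2) by blast
      show "Y2 \<inter> U1 \<subseteq> W" using Y2(4) Y1(4) X1(2) by blast
      show "\<forall>x\<in>X. \<exists>y\<in>Y2. x - y \<in> U1"
      proof
        fix x assume x: "x \<in> X"
        then obtain y2 where y2: "y2 \<in> Y2" "x - y2 \<in> X1" using Y2(5) by blast
        then obtain y1 where y1: "y1 \<in> Y1" "(x - y2) - y1 \<in> U1" using Y1(5) by blast
        have "y2 + y1 \<in> Y2" using submod_add[OF Y2(1) y2(1)] y1(1) Y2(2) by blast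
        moreover have "x - (y2 + y1) \<in> U1" using y1(2) by (simp add: diff_diff_eq)
        ultimately show "\<exists>y\<in>Y2. x - y \<in> U1" by blast
      qed
    qed
  qed
qed

end

context hcb
begin

definition blocked :: "'a set \<Rightarrow> 'a set \<Rightarrow> 'a \<Rightarrow> bool" where
  "blocked U W u \<longleftrightarrow> (\<exists>C f. finite C \<and> C \<subseteq> Cls \<and>
     (\<forall>B\<in>C. f B \<in> U \<and> (\<exists>n\<in>Wset G B. \<forall>x\<in>n. x * f B \<in> W)) \<and> u - (\<Sum>B\<in>C. f B) \<in> W)"

lemma prod_ann_kill:
  assumes W: "submod W" and U1: "submod U1" and n: "\<forall>y\<in>n. y * a \<in> U1" and x: "x \<in> ideal_prod (ann U1 W) n"
  shows "x * a \<in> W"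
proof -
  obtain ms ys and k :: nat where x': "x = (\<Sum>i<k. ms i * ys i)" "\<forall>i<k. ms i \<in> ann U1 W \<and> ys i \<in> n"
    using x unfolding ideal_prod_mem by blast
  have "x * a = (\<Sum>i<k. ms i * (ys i * a))" unfolding x'(1) by (simp add: sum_distrib_right mult.assoc)
  also have "\<dots> \<in> W"
  proof (rule submod_sum[OF W])
    fix i assume "i \<in> {..<k}"
    hence "ms i \<in> ann U1 W" "ys i * a \<in> U1" using x'(2) n by auto
    thus "ms i * (ys i * a) \<in> W" unfolding ann_def by blast
  qed
  finally show ?thesis .
qed

lemma main_induct:
  assumes fin: "finite F0" and qn: "quasinoetherian smul G R"
  shows "\<And>U W u. submod U \<Longrightarrow> submod W \<Longrightarrow> W \<subseteq> U \<Longrightarrow> U \<subseteq> modspan F0 W \<Longrightarrow>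
     vs.dim (vs.span F0 \<inter> U) - vs.dim (vs.span F0 \<inter> W) = k \<Longrightarrow> u \<in> U \<Longrightarrow> blocked U W u"
proof (induction k rule: less_induct)
  case (less k U W u)
  note U = less(2) and W = less(3) and WU = less(4) and sp = less(5) and kdef = less(6) and u = less(7)
  show ?case
  proof (cases "U \<subseteq> W")
    case True
    show ?thesis unfolding blocked_def
      by (intro exI[of _ "{}"] exI[of _ "\<lambda>_. 0"]) (use u True in auto)
  next
    case False
    obtain U1 where U1: "submod U1" "W \<subseteq> U1" "U1 \<subseteq> U" "simpq U1 W"
      using simple_sub_exists[OF W U WU False sp fin] by blast
    have spU1: "U1 \<subseteq> modspan F0 W" using U1(3) sp by blast
    define M where "M = ann U1 W"
    have Mc: "M \<in> cfs smul G" unfolding M_def using ann_cfs[OF W U1(1) U1(4) spU1 fin] .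
    define B0 where "B0 = R``{M}"
    have B0: "B0 \<in> Cls" unfolding B0_def by (rule Cls_class[OF Mc])
    have MB0: "M \<in> B0" unfolding B0_def by (rule Cls_self[OF Mc])
    have WU1ne: "W \<noteq> U1" using U1(4) unfolding simpq_def by blast
    have sp': "U \<subseteq> modspan F0 U1" using sp modspan_mono[OF U1(2)] by blast
    have d1: "vs.dim (vs.span F0 \<inter> W) < vs.dim (vs.span F0 \<inter> U1)"
      using dim_int_strict[OF W U1(1) U1(2) WU1ne order_refl spU1 fin] .
    have d2: "vs.dim (vs.span F0 \<inter> U1) \<le> vs.dim (vs.span F0 \<inter> U)"
      using dim_int_mono[OF U1(1) U U1(3) fin] .
    have lt: "vs.dim (vs.span F0 \<inter> U) - vs.dim (vs.span F0 \<inter> U1) < k" using d1 d2 kdef by linarith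
    have "blocked U U1 u" by (rule less.IH[OF lt U U1(1) U1(3) sp' refl u])
    then obtain C f where C: "finite C" "C \<subseteq> Cls"
      and f: "\<forall>B\<in>C. f B \<in> U \<and> (\<exists>n\<in>Wset G B. \<forall>x\<in>n. x * f B \<in> U1)"
      and uf: "u - (\<Sum>B\<in>C. f B) \<in> U1"
      unfolding blocked_def by blast
    have adj: "\<exists>y. y \<in> U \<and> f B - y \<in> U1 \<and> (\<exists>n\<in>Wset G B. \<forall>x\<in>n. x * y \<in> W)" if BC: "B \<in> C" for B
    proof -
      have BCls: "B \<in> Cls" using BC C(2) by blast
      obtain n where n: "n \<in> Wset G B" "\<forall>x\<in>n. x * f B \<in> U1" using f BC by blast
      have fU: "f B \<in> U" using f BC by blast
      show ?thesis
      proof (cases "B = B0")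
        case True
        obtain J where J: "J \<in> Wset G B" "J \<subseteq> ideal_prod M n"
          using Wset_leftmult[OF n(1) Cls_sub[OF BCls]] MB0 True by blast
        have "\<forall>x\<in>J. x * f B \<in> W"
          using prod_ann_kill[OF W U1(1) n(2)] J(2) unfolding M_def by blast
        thus ?thesis using fU J(1) submod_0[OF U1(1)] by (intro exI[of _ "f B"]) auto
      next
        case False
        define X where "X = {x. \<exists>g\<in>G. x - g * f B \<in> U1}"
        have Xmem: "x \<in> X \<longleftrightarrow> (\<exists>g\<in>G. x - g * f B \<in> U1)" for x unfolding X_def by simp
        have ni: "ideal2 G n" using Wset_ideal[OF n(1) Cls_sub[OF BCls]] .
        have Xs: "submod X" unfolding submod_def
        proof (intro conjI ballI)
          show "0 \<in> X" unfolding Xmem using G0 submod_0[OF U1(1)] by (intro bexI[of _ 0]) auto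
        next
          fix x y assume "x \<in> X" "y \<in> X"
          then obtain g h where g: "g \<in> G" "x - g * f B \<in> U1" and h: "h \<in> G" "y - h * f B \<in> U1"
            unfolding Xmem by blast
          have eq: "x + y - (g + h) * f B = (x - g * f B) + (y - h * f B)" by (simp add: algebra_simps)
          have "x + y - (g + h) * f B \<in> U1" unfolding eq by (rule submod_add[OF U1(1) g(2) h(2)])
          thus "x + y \<in> X" unfolding Xmem using Gadd[OF g(1) h(1)] by blast
        next
          fix x assume "x \<in> X"
          then obtain g where g: "g \<in> G" "x - g * f B \<in> U1" unfolding Xmem by blast
          have eq: "- x - (- g) * f B = - (x - g * f B)" by simp
          have "- x - (- g) * f B \<in> U1" unfolding eq by (rule submod_neg[OF U1(1) g(2)])
          thus "- x \<in> X" unfolding Xmem using Gneg[OF g(1)] by blast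
        next
          fix h x assume h: "h \<in> G" and "x \<in> X"
          then obtain g where g: "g \<in> G" "x - g * f B \<in> U1" unfolding Xmem by blast
          have eq: "h * x - (h * g) * f B = h * (x - g * f B)" by (simp add: algebra_simps mult.assoc)
          have "h * x - (h * g) * f B \<in> U1" unfolding eq by (rule submod_mult[OF U1(1) h g(2)])
          thus "h * x \<in> X" unfolding Xmem using Gmult[OF h g(1)] by blast
        qed
        have U1X: "U1 \<subseteq> X"
        proof
          fix x assume "x \<in> U1"
          thus "x \<in> X" unfolding Xmem using G0 by (intro bexI[of _ 0]) auto
        qed
        have XU: "X \<subseteq> U"
        proof
          fix x assume "x \<in> X"
          then obtain g where g: "g \<in> G" "x - g * f B \<in> U1" unfolding Xmem by blast
          have a: "x - g * f B \<in> U" using g(2) U1(3) by blast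
          have b: "g * f B \<in> U" by (rule submod_mult[OF U g(1) fU])
          have "(x - g * f B) + g * f B \<in> U" by (rule submod_add[OF U a b])
          thus "x \<in> U" by simp
        qed
        have kill: "\<forall>x\<in>n. \<forall>y\<in>X. x * y \<in> U1"
        proof (intro ballI)
          fix x y assume x: "x \<in> n" and "y \<in> X"
          then obtain g where g: "g \<in> G" "y - g * f B \<in> U1" unfolding Xmem by blast
          have xG: "x \<in> G" using ideal2_sub[OF ni x] .
          have xg: "x * g \<in> n" using ideal2_multR[OF ni g(1) x] .
          have a: "x * (y - g * f B) \<in> U1" by (rule submod_mult[OF U1(1) xG g(2)])
          have b: "(x * g) * f B \<in> U1" using n(2) xg by blast
          have eq: "x * y = x * (y - g * f B) + (x * g) * f B" by (simp add: algebra_simps mult.assoc)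
          show "x * y \<in> U1" unfolding eq by (rule submod_add[OF U1(1) a b])
        qed
        have spX: "X \<subseteq> modspan F0 W" using XU sp by blast
        have noB: "\<forall>M'\<in>B. \<not> ext1_nz smul G M' (ann U1 W)"
        proof
          fix M' assume M'B: "M' \<in> B"
          have M'c: "M' \<in> cfs smul G" using Cls_sub[OF BCls] M'B by blast
          have "M' \<notin> B0" using Cls_eq[OF BCls B0 M'B] False by blast
          thus "\<not> ext1_nz smul G M' (ann U1 W)"
            using not_linked[OF B0 MB0 M'c] unfolding M_def by blast
        qed
        obtain Y where Y: "submod Y" "W \<subseteq> Y" "Y \<subseteq> X" "Y \<inter> U1 \<subseteq> W" "\<forall>x\<in>X. \<exists>y\<in>Y. x - y \<in> U1"
          using ext_split_induct[OF fin BCls n(1) W U1(1) Xs U1(4) noB U1X kill spX refl] by blast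
        have fX: "f B \<in> X" unfolding Xmem using G1 submod_0[OF U1(1)] by (intro bexI[of _ 1]) auto
        obtain y where y: "y \<in> Y" "f B - y \<in> U1" using Y(5) fX by blast
        have yU: "y \<in> U" using y(1) Y(3) XU by blast
        have "\<forall>x\<in>n. x * y \<in> W"
        proof
          fix x assume x: "x \<in> n"
          have xG: "x \<in> G" using ideal2_sub[OF ni x] .
          have a: "x * y \<in> Y" by (rule submod_mult[OF Y(1) xG y(1)])
          have b: "x * f B \<in> U1" using kill x fX by blast
          have c: "x * (f B - y) \<in> U1" by (rule submod_mult[OF U1(1) xG y(2)])
          have eq: "x * y = x * f B - x * (f B - y)" by (simp add: algebra_simps)
          have "x * y \<in> U1" unfolding eq by (rule submod_diff[OF U1(1) b c])
          thus "x * y \<in> W" using a Y(4) by blast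
        qed
        thus ?thesis using yU y(2) n(1) by blast
      qed
    qed
    have "\<forall>B\<in>C. \<exists>y. y \<in> U \<and> f B - y \<in> U1 \<and> (\<exists>n\<in>Wset G B. \<forall>x\<in>n. x * y \<in> W)"
      using adj by blast
    then obtain gB where gB: "\<And>B. B \<in> C \<Longrightarrow> gB B \<in> U \<and> f B - gB B \<in> U1 \<and> (\<exists>n\<in>Wset G B. \<forall>x\<in>n. x * gB B \<in> W)"
      by (metis (no_types, lifting) bchoice)
    define r where "r = u - (\<Sum>B\<in>C. gB B)"
    have "r = (u - (\<Sum>B\<in>C. f B)) + (\<Sum>B\<in>C. f B - gB B)"
      unfolding r_def by (simp add: sum_subtractf)
    also have "\<dots> \<in> U1"
      using gB by (intro submod_add[OF U1(1) uf] submod_sum[OF U1(1)]) blast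
    finally have rU1: "r \<in> U1" .
    define f' where "f' B = (if B \<in> C then gB B else 0) + (if B = B0 then r else 0)" for B
    define C' where "C' = insert B0 C"
    have finC': "finite C'" unfolding C'_def using C(1) by simp
    have C'sub: "C' \<subseteq> Cls" unfolding C'_def using C(2) B0 by blast
    have s1: "(\<Sum>B\<in>C'. (if B \<in> C then gB B else 0)) = (\<Sum>B\<in>C. gB B)"
    proof (cases "B0 \<in> C")
      case True
      hence "C' = C" unfolding C'_def by blast
      thus ?thesis by (simp cong: sum.cong)
    next
      case False
      have "(\<Sum>B\<in>C'. (if B \<in> C then gB B else 0)) = (\<Sum>B\<in>C. (if B \<in> C then gB B else 0))"
        unfolding C'_def using False C(1) by simp
      thus ?thesis by (simp cong: sum.cong)
    qed
    have s2: "(\<Sum>B\<in>C'. (if B = B0 then r else 0)) = r"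
      unfolding C'_def using C(1) by (simp add: sum.delta')
    have sumf': "(\<Sum>B\<in>C'. f' B) = (\<Sum>B\<in>C. gB B) + r"
      unfolding f'_def sum.distrib s1 s2 ..
    have "u - (\<Sum>B\<in>C'. f' B) = 0" unfolding sumf' r_def by simp
    hence fin_eq: "u - (\<Sum>B\<in>C'. f' B) \<in> W" using submod_0[OF W] by simp
    have rU: "r \<in> U" using rU1 U1(3) by blast
    have f'prop: "f' B \<in> U \<and> (\<exists>n\<in>Wset G B. \<forall>x\<in>n. x * f' B \<in> W)" if BC': "B \<in> C'" for B
    proof (cases "B = B0")
      case True
      define a where "a = (if B0 \<in> C then gB B0 else 0)"
      have fB: "f' B = a + r" unfolding f'_def a_def using True by simp
      have aU: "a \<in> U" unfolding a_def using gB submod_0[OF U] by auto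
      obtain n1 where n1: "n1 \<in> Wset G B0" "\<forall>x\<in>n1. x * a \<in> W"
      proof (cases "B0 \<in> C")
        case True
        then obtain n where "n \<in> Wset G B0" "\<forall>x\<in>n. x * gB B0 \<in> W" using gB by blast
        thus ?thesis using that True unfolding a_def by simp
      next
        case False
        have "\<forall>x\<in>G. x * a \<in> W" unfolding a_def using False submod_0[OF W] by simp
        thus ?thesis using that Wset.Wnil by blast
      qed
      have Jw: "ideal_prod n1 M \<in> Wset G B0" by (rule Wset.Wcons[OF n1(1) MB0])
      have n1i: "ideal2 G n1" using Wset_ideal[OF n1(1) Cls_sub[OF B0]] .
      have Mi: "ideal2 G M" using cfs_ideal[OF Mc] .
      have "\<forall>x\<in>ideal_prod n1 M. x * f' B \<in> W"
      proof
        fix x assume x: "x \<in> ideal_prod n1 M"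
        have xn1: "x \<in> n1" using ideal_prod_subL[OF n1i Mi] x by blast
        have xM: "x \<in> M" using ideal_prod_subR[OF n1i Mi] x by blast
        have a1: "x * a \<in> W" using n1(2) xn1 by blast
        have a2: "x * r \<in> W" using xM rU1 unfolding M_def ann_def by blast
        have "x * a + x * r \<in> W" by (rule submod_add[OF W a1 a2])
        thus "x * f' B \<in> W" unfolding fB by (simp add: distrib_left)
      qed
      moreover have "f' B \<in> U" unfolding fB by (rule submod_add[OF U aU rU])
      ultimately show ?thesis using Jw True by blast
    next
      case False
      hence BC: "B \<in> C" using BC' unfolding C'_def by blast
      have fB: "f' B = gB B" unfolding f'_def using False BC by simp
      show ?thesis unfolding fB using gB[OF BC] by blast
    qed
    show ?thesis unfolding blocked_def
      using finC' C'sub f'prop fin_eq by blast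
  qed
qed

end

lemma left_gen_mem: "z \<in> left_gen m \<longleftrightarrow> (\<exists>(n::nat) a x. z = (\<Sum>i<n. a i * x i) \<and> (\<forall>i<n. x i \<in> m))"
  unfolding left_gen_def by blast

lemma bimod_mem: "z \<in> bimod G a \<longleftrightarrow> (\<exists>(n::nat) g h. z = (\<Sum>i<n. g i * a * h i) \<and> (\<forall>i<n. g i \<in> G \<and> h i \<in> G))"
  unfolding bimod_def by blast

context hcb
begin

lemma left_gen_lid: "lid (left_gen m)"
  unfolding lid_def
proof (intro conjI ballI allI)
  show "0 \<in> left_gen m" unfolding left_gen_mem by (intro exI[of _ 0]) simp
next
  fix u v assume "u \<in> left_gen m" "v \<in> left_gen m"
  then obtain a1 x1 a2 x2 and n1 n2 :: nat where u: "u = (\<Sum>i<n1. a1 i * x1 i)" "\<forall>i<n1. x1 i \<in> m"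
    and v: "v = (\<Sum>i<n2. a2 i * x2 i)" "\<forall>i<n2. x2 i \<in> m"
    unfolding left_gen_mem by blast
  define a where "a i = (if i < n1 then a1 i else a2 (i - n1))" for i
  define x where "x i = (if i < n1 then x1 i else x2 (i - n1))" for i
  have "u + v = (\<Sum>i<n1+n2. a i * x i)"
    unfolding u v a_def x_def by (rule sum_concat_mult[symmetric])
  moreover have "\<forall>i<n1+n2. x i \<in> m" using u(2) v(2) unfolding x_def by auto
  ultimately show "u + v \<in> left_gen m" unfolding left_gen_mem by blast
next
  fix c u assume "u \<in> left_gen m"
  then obtain a x and n :: nat where u: "u = (\<Sum>i<n. a i * x i)" "\<forall>i<n. x i \<in> m"
    unfolding left_gen_mem by blast
  have "c * u = (\<Sum>i<n. (c * a i) * x i)" unfolding u by (simp add: sum_distrib_left mult.assoc)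
  thus "c * u \<in> left_gen m" unfolding left_gen_mem using u(2)
    by (intro exI[of _ n] exI[of _ "\<lambda>i. c * a i"] exI[of _ x]) simp
qed

lemma left_gen_single: "x \<in> m \<Longrightarrow> c * x \<in> left_gen m"
  unfolding left_gen_mem by (intro exI[of _ 1] exI[of _ "\<lambda>_. c"] exI[of _ "\<lambda>_. x"]) simp

lemma mult_span: "finite S \<Longrightarrow> y \<in> vs.span S \<Longrightarrow> f * y \<in> vs.span ((\<lambda>s. f * s) ` S)"
proof -
  assume fS: "finite S" and y: "y \<in> vs.span S"
  then obtain k where yk: "y = (\<Sum>s\<in>S. smul (k s) s)" using vs.span_finite[OF fS] by blast
  have "f * y = (\<Sum>s\<in>S. smul (k s) (f * s))" unfolding yk by (simp add: sum_distrib_left smul_mult_right)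
  also have "\<dots> \<in> vs.span ((\<lambda>s. f * s) ` S)"
    by (intro vs.span_sum vs.span_scale vs.span_base) auto
  finally show ?thesis .
qed

lemma fd_cyclic:
  assumes qc: "quasicentral G" and fq: "findim_quot smul G m"
  shows "\<exists>F0. finite F0 \<and> {x. \<exists>g\<in>G. x - g * a \<in> left_gen m} \<subseteq> modspan F0 (left_gen m)"
proof -
  have qa: "(\<exists>F. finite F \<and> F \<subseteq> bimod G a \<and> bimod G a \<subseteq> {\<Sum>f\<in>F. c f * f | c. \<forall>f\<in>F. c f \<in> G}) \<and>
     (\<exists>F. finite F \<and> F \<subseteq> bimod G a \<and> bimod G a \<subseteq> {\<Sum>f\<in>F. f * c f | c. \<forall>f\<in>F. c f \<in> G})"
    using qc unfolding quasicentral_def by (rule allE)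
  obtain F where F: "finite F" "F \<subseteq> bimod G a" "bimod G a \<subseteq> {\<Sum>f\<in>F. f * c f | c. \<forall>f\<in>F. c f \<in> G}"
    using conjunct2[OF qa] by blast
  obtain F' where F': "finite F'" "F' \<subseteq> G" "\<forall>g\<in>G. \<exists>f\<in>vs.span F'. g - f \<in> m"
    using fq unfolding findim_quot_def by blast
  define F0 where "F0 = (\<lambda>(f, f'). f * f') ` (F \<times> F')"
  have finF0: "finite F0" unfolding F0_def using F(1) F'(1) by simp
  let ?L = "left_gen m"
  have L: "lid ?L" by (rule left_gen_lid)
  have sub: "(\<lambda>s. f * s) ` F' \<subseteq> F0" if fF: "f \<in> F" for f
  proof
    fix y assume "y \<in> (\<lambda>s. f * s) ` F'"
    then obtain s where s: "s \<in> F'" "y = f * s" by blast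
    show "y \<in> F0" unfolding F0_def by (rule image_eqI[of _ _ "(f, s)"]) (use s fF in auto)
  qed
  have main: "g * a \<in> modspan F0 ?L" if g: "g \<in> G" for g
  proof -
    have "g * a \<in> bimod G a" unfolding bimod_mem
      by (intro exI[of _ 1] exI[of _ "\<lambda>_. g"] exI[of _ "\<lambda>_. 1"]) (simp add: g G1)
    hence "g * a \<in> {\<Sum>f\<in>F. f * c f | c. \<forall>f\<in>F. c f \<in> G}" using F(3) by (rule subsetD[rotated])
    hence "\<exists>c. g * a = (\<Sum>f\<in>F. f * c f) \<and> (\<forall>f\<in>F. c f \<in> G)" by simp
    then obtain c where c: "g * a = (\<Sum>f\<in>F. f * c f)" "\<forall>f\<in>F. c f \<in> G" by blast
    have "\<forall>f\<in>F. \<exists>s. s \<in> vs.span F' \<and> c f - s \<in> m" using F'(3) c(2) by blast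
    then obtain s where s: "\<And>f. f \<in> F \<Longrightarrow> s f \<in> vs.span F' \<and> c f - s f \<in> m" by metis
    have y: "(\<Sum>f\<in>F. f * s f) \<in> vs.span F0"
    proof (rule vs.span_sum)
      fix f assume f: "f \<in> F"
      have "f * s f \<in> vs.span ((\<lambda>s. f * s) ` F')" using mult_span[OF F'(1)] s[OF f] by blast
      also have "\<dots> \<subseteq> vs.span F0" by (rule vs.span_mono[OF sub[OF f]])
      finally show "f * s f \<in> vs.span F0" .
    qed
    have l: "(\<Sum>f\<in>F. f * (c f - s f)) \<in> ?L"
    proof (rule submod_sum[OF lid_submod[OF L]])
      fix f assume "f \<in> F"
      hence "c f - s f \<in> m" using s by blast
      thus "f * (c f - s f) \<in> ?L" by (rule left_gen_single)
    qed
    have "g * a - (\<Sum>f\<in>F. f * s f) = (\<Sum>f\<in>F. f * (c f - s f))"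
      unfolding c(1) by (simp add: right_diff_distrib sum_subtractf)
    hence "g * a - (\<Sum>f\<in>F. f * s f) \<in> ?L" using l by simp
    thus ?thesis unfolding modspan_def using y by blast
  qed
  have "{x. \<exists>g\<in>G. x - g * a \<in> ?L} \<subseteq> modspan F0 ?L"
  proof
    fix x assume "x \<in> {x. \<exists>g\<in>G. x - g * a \<in> ?L}"
    then obtain g where g: "g \<in> G" "x - g * a \<in> ?L" by blast
    obtain y where y: "y \<in> vs.span F0" "g * a - y \<in> ?L" using main[OF g(1)] unfolding modspan_def by blast
    have "(x - g * a) + (g * a - y) \<in> ?L" by (rule lid_add[OF L g(2) y(2)])
    hence "x - y \<in> ?L" by simp
    thus "x \<in> modspan F0 ?L" unfolding modspan_def using y(1) by blast
  qed
  thus ?thesis using finF0 by blast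
qed

lemma HC_main:
  assumes qn: "quasinoetherian smul G R" and qc: "quasicentral G"
  shows "HC_block smul G R"
  unfolding HC_block_def
proof (intro ballI)
  fix B m assume B: "B \<in> Cls" and m: "m \<in> Wset G B"
  let ?L = "left_gen m"
  have L: "lid ?L" by (rule left_gen_lid)
  have fq: "findim_quot smul G m" using qn B m unfolding quasinoetherian_def by blast
  show "block_quot G Cls ?L" unfolding block_quot_def
  proof (intro conjI allI impI)
    fix a
    define U0 where "U0 = {x. \<exists>g\<in>G. x - g * a \<in> ?L}"
    have U0mem: "x \<in> U0 \<longleftrightarrow> (\<exists>g\<in>G. x - g * a \<in> ?L)" for x unfolding U0_def by simp
    have "\<exists>F0. finite F0 \<and> U0 \<subseteq> modspan F0 ?L" unfolding U0_def by (rule fd_cyclic[OF qc fq])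
    then obtain F0 where F0: "finite F0" "U0 \<subseteq> modspan F0 ?L" by blast
    have Ls: "submod ?L" by (rule lid_submod[OF L])
    have U0s: "submod U0" unfolding submod_def
    proof (intro conjI ballI)
      show "0 \<in> U0" unfolding U0mem using G0 lid_0[OF L] by (intro bexI[of _ 0]) auto
    next
      fix x y assume "x \<in> U0" "y \<in> U0"
      then obtain g h where g: "g \<in> G" "x - g * a \<in> ?L" and h: "h \<in> G" "y - h * a \<in> ?L"
        unfolding U0mem by blast
      have eq: "x + y - (g + h) * a = (x - g * a) + (y - h * a)" by (simp add: algebra_simps)
      have "x + y - (g + h) * a \<in> ?L" unfolding eq by (rule lid_add[OF L g(2) h(2)])
      thus "x + y \<in> U0" unfolding U0mem using Gadd[OF g(1) h(1)] by blast
    next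
      fix x assume "x \<in> U0"
      then obtain g where g: "g \<in> G" "x - g * a \<in> ?L" unfolding U0mem by blast
      have eq: "- x - (- g) * a = - (x - g * a)" by simp
      have "- x - (- g) * a \<in> ?L" unfolding eq by (rule lid_neg[OF L g(2)])
      thus "- x \<in> U0" unfolding U0mem using Gneg[OF g(1)] by blast
    next
      fix h x assume h: "h \<in> G" and "x \<in> U0"
      then obtain g where g: "g \<in> G" "x - g * a \<in> ?L" unfolding U0mem by blast
      have eq: "h * x - (h * g) * a = h * (x - g * a)" by (simp add: algebra_simps mult.assoc)
      have "h * x - (h * g) * a \<in> ?L" unfolding eq by (rule lid_mult[OF L g(2)])
      thus "h * x \<in> U0" unfolding U0mem using Gmult[OF h g(1)] by blast
    qed
    have LU0: "?L \<subseteq> U0"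
    proof
      fix x assume "x \<in> ?L"
      thus "x \<in> U0" unfolding U0mem using G0 by (intro bexI[of _ 0]) auto
    qed
    have aU0: "a \<in> U0" unfolding U0mem using G1 lid_0[OF L] by (intro bexI[of _ 1]) auto
    have "blocked U0 ?L a"
      by (rule main_induct[OF F0(1) qn U0s Ls LU0 F0(2) refl aU0])
    then obtain C f where C: "finite C" "C \<subseteq> Cls"
      and f: "\<forall>B\<in>C. f B \<in> U0 \<and> (\<exists>n\<in>Wset G B. \<forall>x\<in>n. x * f B \<in> ?L)"
      and af: "a - (\<Sum>B\<in>C. f B) \<in> ?L"
      unfolding blocked_def by blast
    have "\<forall>B\<in>C. f B \<in> vlift G ?L B" unfolding vlift_def using f by blast
    thus "\<exists>C f. finite C \<and> C \<subseteq> Cls \<and> (\<forall>B\<in>C. f B \<in> vlift G ?L B) \<and> a - (\<Sum>B\<in>C. f B) \<in> ?L"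
      using C af by blast
  next
    fix C f assume h: "finite C \<and> C \<subseteq> Cls \<and> (\<forall>B\<in>C. f B \<in> vlift G ?L B) \<and> (\<Sum>B\<in>C. f B) \<in> ?L"
    show "\<forall>B\<in>C. f B \<in> ?L"
      by (rule uniqueness[OF qn L conjunct1[OF h] conjunct1[OF conjunct2[OF h]]
            conjunct1[OF conjunct2[OF conjunct2[OF h]]] conjunct2[OF conjunct2[OF conjunct2[OF h]]]])
  qed
qed

end

theorem mainTheorem12:
  fixes smul :: "'k::field \<Rightarrow> 'a::ring_1 \<Rightarrow> 'a" and G :: "'a set"
  assumes "kalg smul"
    and "subalg smul G"
    and "quasinoetherian smul G (sim_rel smul G)"
    and "quasicentral G"
  shows "HC_block smul G (sim_rel smul G)"
proof -
  interpret hcb smul G using assms(1,2) by unfold_locales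
  show ?thesis using HC_main[OF assms(3,4)] .
qed


end
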